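(* Let $X_1,X_2,\dots$ be independent integer-valued random variables with common distribution function $F(x)=P(X_1\le x)$, where $F$ is not concentrated on a half-axis, and let $S_0=0$, $S_n=X_1+\cdots+X_n$. Suppose $\mathbb E[X_1]<0$ and that for some $0<\xi<1$ and $0<r<1$, \[ P(X_1\le x)=\xi\, r^{-x},\qquad x=0,-1,-2,\dots. \] Let \[ \zeta=\sum_{n=1}^\infty P\Big(\max_{1\le k<n}S_k<0,\ S_n=0\Big), \] and define \[ \mathcal M(s)=\mathbb E\Big[s^{\sup_{n\ge0}S_n}\Big],\qquad \mathcal F^+(s)=\mathbb E\big[s^{X_1};\,X_1>0\big]. \] Then for $0\le s<1$, \[ \mathcal M(s)=\frac{1-\zeta-r-(1-r)\mathbb E[X_1]}{1-\zeta-\Big[\Big(1-\frac{1-r}{1-s}\Big)\mathcal F^+(s)+s\,\frac{1-r}{1-s}\,\big(1-F(0)\big)\Big]}. \]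
   Context: For $n=1$ the condition $\max_{1\le k<n}S_k<0$ is vacuous; $\zeta$ is the probability that the first $n\ge1$ with $S_n\ge 0$ exists and has $S_n=0$. $\mathbb E[s^{X_1};X_1>0]$ denotes $\sum_{x\ge1}s^xP(X_1=x)$. *)

theory Defs
  imports "HOL-Probability.Probability"
begin

text \<open>Partial sums of the random walk: the steps are indexed from 0,
  so the paper's X_1, X_2, ... are X 0, X 1, ...; S_n = X_1 + ... + X_n.\<close>
definition rw_S :: "(nat \<Rightarrow> 'a \<Rightarrow> int) \<Rightarrow> nat \<Rightarrow> 'a \<Rightarrow> int" where
  "rw_S X n \<omega> = (\<Sum>i<n. X i \<omega>)"

end

theory Submission imports Defs begin

lemma measurable_int_add[measurable (raw)]:
  fixes f g :: "'a \<Rightarrow> int"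
  assumes "f \<in> M \<rightarrow>\<^sub>M count_space UNIV" "g \<in> M \<rightarrow>\<^sub>M count_space UNIV"
  shows "(\<lambda>x. f x + g x) \<in> M \<rightarrow>\<^sub>M count_space UNIV"
proof -
  have "(\<lambda>x. (f x, g x)) \<in> M \<rightarrow>\<^sub>M count_space UNIV \<Otimes>\<^sub>M count_space UNIV"
    using assms by measurable
  then have "(\<lambda>x. (f x, g x)) \<in> M \<rightarrow>\<^sub>M count_space (UNIV::(int\<times>int) set)"
    by (simp add: pair_measure_countable)
  from measurable_compose[OF this, of "\<lambda>p. fst p + snd p"] show ?thesis
    by simp
qed

lemma measurable_int_sum[measurable (raw)]:
  fixes f :: "'i \<Rightarrow> 'a \<Rightarrow> int"
  assumes "\<And>i. i \<in> I \<Longrightarrow> f i \<in> M \<rightarrow>\<^sub>M count_space UNIV"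
  shows "(\<lambda>x. \<Sum>i\<in>I. f i x) \<in> M \<rightarrow>\<^sub>M count_space UNIV"
  using assms
proof (induction I rule: infinite_finite_induct)
  case (insert i I)
  then show ?case by (simp add: measurable_int_add)
qed simp_all

lemma meas_countable_dom:
  assumes "countable (space K)" "\<And>x. x \<in> space K \<Longrightarrow> {x} \<in> sets K"
    and "f \<in> space K \<rightarrow> space N"
  shows "f \<in> K \<rightarrow>\<^sub>M N"
proof (rule measurableI)
  show "\<And>x. x \<in> space K \<Longrightarrow> f x \<in> space N" using assms(3) by auto
  fix A assume "A \<in> sets N"
  show "f -` A \<inter> space K \<in> sets K"
    by (rule sets.countable) (use assms(1,2) countable_subset in auto)
qed

abbreviation PV :: "nat set \<Rightarrow> (nat \<Rightarrow> int) measure" where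
  "PV I \<equiv> PiM I (\<lambda>_. count_space UNIV)"

lemma PV_countable: "finite I \<Longrightarrow> countable (space (PV I))"
  by (simp add: space_PiM countable_PiE)

lemma PV_single: assumes "finite I" "v \<in> space (PV I)" shows "{v} \<in> sets (PV I)"
proof -
  have "{v} = PiE I (\<lambda>i. {v i})" using assms(2)
    by (simp add: space_PiM PiE_iff PiE_singleton)
  also have "\<dots> \<in> sets (PV I)" using assms(1) by (intro sets_PiM_I_finite) auto
  finally show ?thesis .
qed

lemma PV_meas: "finite I \<Longrightarrow> f \<in> space (PV I) \<rightarrow> space N \<Longrightarrow> f \<in> PV I \<rightarrow>\<^sub>M N"
  by (rule meas_countable_dom) (auto simp: PV_countable PV_single)

lemma PV_meas_UNIV[measurable]: "finite I \<Longrightarrow> f \<in> PV I \<rightarrow>\<^sub>M count_space UNIV"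
  by (rule PV_meas) auto

lemma PV_meas_borel[measurable]: "finite I \<Longrightarrow> (f :: _ \<Rightarrow> real) \<in> borel_measurable (PV I)"
  by (rule PV_meas) auto

lemma PVP_meas: 
  assumes "finite I" "finite J" "f \<in> space (PV I \<Otimes>\<^sub>M PV J) \<rightarrow> space N"
  shows "f \<in> PV I \<Otimes>\<^sub>M PV J \<rightarrow>\<^sub>M N"
proof (rule meas_countable_dom)
  show "countable (space (PV I \<Otimes>\<^sub>M PV J))"
    using assms(1,2) by (simp add: space_pair_measure PV_countable)
  fix x assume x: "x \<in> space (PV I \<Otimes>\<^sub>M PV J)"
  then have "{x} = {fst x} \<times> {snd x}" by auto
  also have "\<dots> \<in> sets (PV I \<Otimes>\<^sub>M PV J)"
    using x assms(1,2) by (intro pair_measureI PV_single) (auto simp: space_pair_measure)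
  finally show "{x} \<in> sets (PV I \<Otimes>\<^sub>M PV J)" .
qed (use assms in auto)

lemma PVP_meas_borel[measurable]: "finite I \<Longrightarrow> finite J \<Longrightarrow> (f :: _ \<Rightarrow> real) \<in> borel_measurable (PV I \<Otimes>\<^sub>M PV J)"
  by (rule PVP_meas) auto

definition Sv :: "nat \<Rightarrow> (nat \<Rightarrow> int) \<Rightarrow> int" where "Sv k v = (\<Sum>i<k. v i)"
definition Mv :: "nat \<Rightarrow> (nat \<Rightarrow> int) \<Rightarrow> int" where "Mv n v = Max ((\<lambda>k. Sv k v) ` {..n})"

lemma Sv_cong: "k \<le> n \<Longrightarrow> (\<And>i. i < n \<Longrightarrow> v i = w i) \<Longrightarrow> Sv k v = Sv k w"
  unfolding Sv_def by (intro sum.cong) auto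

lemma Mv_cong: "(\<And>i. i < n \<Longrightarrow> v i = w i) \<Longrightarrow> Mv n v = Mv n w"
  unfolding Mv_def by (intro arg_cong[where f=Max] image_cong refl Sv_cong) auto

lemma Sv_le_Mv: "k \<le> n \<Longrightarrow> Sv k v \<le> Mv n v"
  unfolding Mv_def by (intro Max_ge) auto

lemma Mv_ex: "\<exists>k\<le>n. Mv n v = Sv k v"
proof -
  have "Mv n v \<in> (\<lambda>k. Sv k v) ` {..n}" unfolding Mv_def by (intro Max_in) auto
  then show ?thesis by auto
qed

lemma Mv_ge0: "0 \<le> Mv n v"
  using Sv_le_Mv[of 0 n v] by (simp add: Sv_def)

lemma Mv_mono: "Mv n v \<le> Mv (Suc n) v"
  using Mv_ex[of n v] Sv_le_Mv[of _ "Suc n" v] by fastforce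

lemma Sv_Suc_shift: "Sv (Suc k) v = v 0 + Sv k (\<lambda>i. v (Suc i))"
  unfolding Sv_def by (rule sum.lessThan_Suc_shift)

lemma Mv_Suc: "Mv (Suc n) v = max 0 (v 0 + Mv n (\<lambda>i. v (Suc i)))"
proof (rule antisym)
  show "Mv (Suc n) v \<le> max 0 (v 0 + Mv n (\<lambda>i. v (Suc i)))"
  proof -
    obtain k where k: "k \<le> Suc n" "Mv (Suc n) v = Sv k v" using Mv_ex by blast
    show ?thesis
    proof (cases k)
      case 0 then show ?thesis using k by (simp add: Sv_def)
    next
      case (Suc j)
      then have "Sv k v = v 0 + Sv j (\<lambda>i. v (Suc i))" by (simp add: Sv_Suc_shift)
      also have "\<dots> \<le> v 0 + Mv n (\<lambda>i. v (Suc i))" using Suc k(1) by (simp add: Sv_le_Mv)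
      finally show ?thesis using k by simp
    qed
  qed
next
  obtain j where j: "j \<le> n" "Mv n (\<lambda>i. v (Suc i)) = Sv j (\<lambda>i. v (Suc i))" using Mv_ex by blast
  have "v 0 + Mv n (\<lambda>i. v (Suc i)) = Sv (Suc j) v" using j by (simp add: Sv_Suc_shift)
  also have "\<dots> \<le> Mv (Suc n) v" using j by (intro Sv_le_Mv) simp
  finally show "max 0 (v 0 + Mv n (\<lambda>i. v (Suc i))) \<le> Mv (Suc n) v"
    using Mv_ge0[of "Suc n" v] by simp
qed

lemma Sv_abs: "k \<le> n \<Longrightarrow> Sv k v \<le> (\<Sum>i<n. \<bar>v i\<bar>)"
proof -
  assume "k \<le> n"
  have "Sv k v \<le> (\<Sum>i<k. \<bar>v i\<bar>)" unfolding Sv_def by (intro sum_mono) simp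
  also have "\<dots> \<le> (\<Sum>i<n. \<bar>v i\<bar>)" using \<open>k \<le> n\<close> by (intro sum_mono2) auto
  finally show ?thesis .
qed

lemma Mv_abs: "Mv n v \<le> (\<Sum>i<n. \<bar>v i\<bar>)"
  using Mv_ex[of n v] Sv_abs by fastforce

lemma rw_S_Sv: "rw_S X k \<omega> = Sv k (\<lambda>i. X i \<omega>)"
  by (simp add: rw_S_def Sv_def)

lemma comp_cnt:
  assumes "h \<in> K \<rightarrow>\<^sub>M count_space UNIV" 
  shows "(\<lambda>x. (f (h x) :: real)) \<in> borel_measurable K"
  using measurable_compose[OF assms, of f borel] by (simp add: measurable_count_space_eq1)

lemma gsum: "((s::real) - r) * (\<Sum>k<m. s ^ (m - k) * r ^ k) = s * (s ^ m - r ^ m)"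
proof (induction m)
  case 0 then show ?case by simp
next
  case (Suc m)
  have "(\<Sum>k<Suc m. s ^ (Suc m - k) * r ^ k) = (\<Sum>k<m. s ^ (Suc m - k) * r ^ k) + s * r ^ m"
    by simp
  also have "(\<Sum>k<m. s ^ (Suc m - k) * r ^ k) = s * (\<Sum>k<m. s ^ (m - k) * r ^ k)"
    by (simp add: sum_distrib_left Suc_diff_le mult.assoc)
  finally have e: "(\<Sum>k<Suc m. s ^ (Suc m - k) * r ^ k) = s * (\<Sum>k<m. s ^ (m - k) * r ^ k) + s * r ^ m" .
  define T where "T = (\<Sum>k<m. s ^ (m - k) * r ^ k)"
  have "(s - r) * (s * T + s * r ^ m) = s * ((s - r) * T) + (s - r) * s * r ^ m" by (simp add: algebra_simps)
  also have "\<dots> = s * (s * (s ^ m - r ^ m)) + (s - r) * s * r ^ m" using Suc.IH by (simp add: T_def)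
  also have "\<dots> = s * (s ^ Suc m - r ^ Suc m)" by (simp add: algebra_simps)
  finally show ?case unfolding e T_def .
qed

lemma int_Sup_mem:
  fixes X :: "int set"
  assumes "X \<noteq> {}" "bdd_above X"
  shows "Sup X \<in> X"
proof -
  obtain x where x: "x \<in> X" using assms(1) by blast
  obtain y where y: "\<forall>z\<in>X. z \<le> y" using assms(2) by (auto simp: bdd_above_def)
  let ?m = "Max (X \<inter> {x..y})"
  have fin: "finite (X \<inter> {x..y})" by simp
  have ne: "X \<inter> {x..y} \<noteq> {}" using x y by auto
  have m: "?m \<in> X" using Max_in[OF fin ne] by simp
  have xm: "x \<le> ?m" using x y fin by (intro Max_ge) auto
  have le: "z \<le> ?m" if "z \<in> X" for z
  proof (cases "x \<le> z")
    case True then show ?thesis using that y fin by (intro Max_ge) auto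
  next
    case False then show ?thesis using xm by simp
  qed
  have "Sup X = ?m" by (rule cSup_eq_maximum[OF m le])
  then show ?thesis using m by simp
qed

lemma Sv_add: "Sv (k + m) v = Sv k v + Sv m (\<lambda>i. v (k + i))"
  by (induction m) (auto simp: Sv_def)

lemma revsum: "k \<le> Suc n \<Longrightarrow> (\<Sum>i<k. f (n - i)) = (\<Sum>i<Suc n. f i) - (\<Sum>i<Suc n - k. (f i :: int))"
proof (induction k)
  case 0 then show ?case by simp
next
  case (Suc k)
  then have k: "k \<le> n" by simp
  have "Suc n - k = Suc (n - k)" using k by simp
  then have "(\<Sum>i<Suc n - k. f i) = (\<Sum>i<n - k. f i) + f (n - k)" by simp
  moreover have "Suc n - Suc k = n - k" by simp
  ultimately show ?case using Suc by simp
qed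

lemma rev_equiv: "(\<forall>k\<in>{1..<Suc n}. P (Suc n - k)) \<longleftrightarrow> (\<forall>j\<in>{1..<Suc n}. P j)"
proof
  assume h: "\<forall>k\<in>{1..<Suc n}. P (Suc n - k)"
  show "\<forall>j\<in>{1..<Suc n}. P j"
  proof
    fix j assume j: "j \<in> {1..<Suc n}"
    then have "Suc n - j \<in> {1..<Suc n}" by auto
    with h have "P (Suc n - (Suc n - j))" by blast
    moreover have "Suc n - (Suc n - j) = j" using j by auto
    ultimately show "P j" by simp
  qed
next
  assume h: "\<forall>j\<in>{1..<Suc n}. P j"
  show "\<forall>k\<in>{1..<Suc n}. P (Suc n - k)"
  proof
    fix k assume k: "k \<in> {1..<Suc n}"
    then have "Suc n - k \<in> {1..<Suc n}" by auto
    with h show "P (Suc n - k)" by blast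
  qed
qed

locale rw = prob_space M for M :: "'a measure" +
  fixes X :: "nat \<Rightarrow> 'a \<Rightarrow> int" and \<xi> r :: real
  assumes indep: "indep_vars (\<lambda>_. count_space UNIV) X UNIV"
    and ident: "\<And>i. distr M (count_space UNIV) (X i) = distr M (count_space UNIV) (X 0)"
    and intX: "integrable M (\<lambda>\<omega>. real_of_int (X 0 \<omega>))"
    and meanneg: "(\<integral>\<omega>. real_of_int (X 0 \<omega>) \<partial>M) < 0"
    and xi: "0 < \<xi>" "\<xi> < 1" and rr: "0 < r" "r < 1"
    and tail: "\<And>x::int. x \<le> 0 \<Longrightarrow> measure M {\<omega> \<in> space M. X 0 \<omega> \<le> x} = \<xi> * r ^ nat (- x)"
begin

lemma X_meas[measurable]: "X i \<in> M \<rightarrow>\<^sub>M count_space UNIV"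
  using indep by (auto simp: indep_vars_def)

definition mu :: "int measure" where "mu = distr M (count_space UNIV) (X 0)"

lemma mu_prob: "prob_space mu"
  unfolding mu_def by (rule prob_space_distr) simp

lemma sets_mu[simp]: "sets mu = UNIV" and space_mu[simp]: "space mu = UNIV"
  by (simp_all add: mu_def)

lemma distr_Xi: "distr M (count_space UNIV) (X i) = mu"
  using ident[of i] by (simp add: mu_def)

lemma vec_distr:
  assumes "inj_on \<sigma> I"
  shows "distr M (PV I) (\<lambda>\<omega>. \<lambda>i\<in>I. X (\<sigma> i) \<omega>) = PiM I (\<lambda>_. mu)"
proof -
  have full: "distr M (PV UNIV) (\<lambda>\<omega>. \<lambda>i\<in>UNIV. X i \<omega>) = PiM UNIV (\<lambda>i. distr M (count_space UNIV) (X i))"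
    by (rule indep_vars_iff_distr_eq_PiM[THEN iffD1]) (auto simp: indep)
  also have "\<dots> = PiM UNIV (\<lambda>_. mu)"
    by (simp add: distr_Xi)
  finally have full': "distr M (PV UNIV) (\<lambda>\<omega>. \<lambda>i\<in>UNIV. X i \<omega>) = PiM UNIV (\<lambda>_. mu)" .
  define g where "g = (\<lambda>v. \<lambda>i\<in>I. (v::nat \<Rightarrow> int) (\<sigma> i))"
  have gm: "g \<in> PV UNIV \<rightarrow>\<^sub>M PV I"
    unfolding g_def by measurable
  have "(\<lambda>\<omega>. \<lambda>i\<in>I. X (\<sigma> i) \<omega>) = g \<circ> (\<lambda>\<omega>. \<lambda>i\<in>UNIV. X i \<omega>)"
    by (auto simp: g_def fun_eq_iff)
  then have "distr M (PV I) (\<lambda>\<omega>. \<lambda>i\<in>I. X (\<sigma> i) \<omega>) = distr (distr M (PV UNIV) (\<lambda>\<omega>. \<lambda>i\<in>UNIV. X i \<omega>)) (PV I) g"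
    by (simp add: distr_distr[OF gm])
  also have "\<dots> = distr (PiM UNIV (\<lambda>_. mu)) (PiM I (\<lambda>i. mu)) g"
    unfolding full' by (intro distr_cong refl sets_PiM_cong) auto
  also have "\<dots> = PiM I (\<lambda>_. mu)"
    unfolding g_def using assms by (intro distr_PiM_reindex) (auto simp: mu_prob)
  finally show ?thesis .
qed

lemma split_last:
  fixes F :: "(nat \<Rightarrow> int) \<Rightarrow> int \<Rightarrow> real"
  assumes intF: "integrable M (\<lambda>\<omega>. F (\<lambda>i\<in>{..<n}. X i \<omega>) (X n \<omega>))"
  shows "(\<integral>\<omega>. F (\<lambda>i\<in>{..<n}. X i \<omega>) (X n \<omega>) \<partial>M) = (\<integral>\<omega>. (\<integral>\<omega>'. F (\<lambda>i\<in>{..<n}. X i \<omega>) (X 0 \<omega>') \<partial>M) \<partial>M)"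
proof -
  let ?past = "\<lambda>\<omega>. \<lambda>i\<in>{..<n}. X i \<omega>"
  let ?cur = "\<lambda>\<omega>. \<lambda>i\<in>{n}. X i \<omega>"
  have ind: "indep_var (PV {..<n}) ?past (PV {n}) ?cur"
    by (rule indep_var_restrict[OF indep]) auto
  define \<nu> where "\<nu> = distr M (PV {..<n}) ?past"
  define \<kappa> where "\<kappa> = distr M (PV {n}) ?cur"
  have \<kappa>: "\<kappa> = PiM {n} (\<lambda>_. mu)" unfolding \<kappa>_def using vec_distr[of id "{n}"] by simp
  have \<kappa>0: "\<kappa> = distr M (PV {n}) (\<lambda>\<omega>. \<lambda>i\<in>{n}. X 0 \<omega>)" 
    unfolding \<kappa> using vec_distr[of "\<lambda>_. 0" "{n}"] by simp
  interpret nu: prob_space \<nu> unfolding \<nu>_def by (rule prob_space_distr) measurable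
  interpret ka: prob_space \<kappa> unfolding \<kappa>_def by (rule prob_space_distr) measurable
  interpret pp: pair_prob_space \<nu> \<kappa> ..
  have joint: "distr M (PV {..<n} \<Otimes>\<^sub>M PV {n}) (\<lambda>\<omega>. (?past \<omega>, ?cur \<omega>)) = \<nu> \<Otimes>\<^sub>M \<kappa>"
    using ind unfolding indep_var_distribution_eq \<nu>_def \<kappa>_def by simp
  define F' where "F' = (\<lambda>(v, w). F v (w n))"
  have Fm0: "F' \<in> borel_measurable (PV {..<n} \<Otimes>\<^sub>M PV {n})"
    by (rule PVP_meas) (auto simp: space_pair_measure)
  have sP: "sets (\<nu> \<Otimes>\<^sub>M \<kappa>) = sets (PV {..<n} \<Otimes>\<^sub>M PV {n})"
    unfolding \<nu>_def \<kappa>_def by (intro sets_pair_measure_cong) simp_all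
  have Fm: "F' \<in> borel_measurable (\<nu> \<Otimes>\<^sub>M \<kappa>)"
    by (subst measurable_cong_sets[OF sP refl]) (rule Fm0)
  have "(\<integral>\<omega>. F (?past \<omega>) (X n \<omega>) \<partial>M) = (\<integral>\<omega>. F' (?past \<omega>, ?cur \<omega>) \<partial>M)"
    by (simp add: F'_def)
  also have "\<dots> = integral\<^sup>L (distr M (PV {..<n} \<Otimes>\<^sub>M PV {n}) (\<lambda>\<omega>. (?past \<omega>, ?cur \<omega>))) F'"
    by (rule integral_distr[symmetric]) measurable
  also have "\<dots> = integral\<^sup>L (\<nu> \<Otimes>\<^sub>M \<kappa>) F'" by (simp add: joint)
  also have "\<dots> = (\<integral>v. (\<integral>w. F' (v, w) \<partial>\<kappa>) \<partial>\<nu>)"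
  proof (rule pp.integral_fst'[symmetric])
    have "integrable (distr M (PV {..<n} \<Otimes>\<^sub>M PV {n}) (\<lambda>\<omega>. (?past \<omega>, ?cur \<omega>))) F'"
      by (subst integrable_distr_eq) (use intF in \<open>auto simp: F'_def\<close>)
    then show "integrable (\<nu> \<Otimes>\<^sub>M \<kappa>) F'" by (simp add: joint)
  qed
  also have "\<dots> = (\<integral>\<omega>. (\<integral>w. F' (?past \<omega>, w) \<partial>\<kappa>) \<partial>M)"
    unfolding \<nu>_def by (rule integral_distr) measurable
  also have "\<dots> = (\<integral>\<omega>. (\<integral>\<omega>'. F (?past \<omega>) (X 0 \<omega>') \<partial>M) \<partial>M)"
  proof (rule Bochner_Integration.integral_cong[OF refl])
    fix \<omega> 
    have "(\<integral>w. F' (?past \<omega>, w) \<partial>\<kappa>) = (\<integral>\<omega>'. F' (?past \<omega>, \<lambda>i\<in>{n}. X 0 \<omega>') \<partial>M)"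
      unfolding \<kappa>0 by (rule integral_distr) measurable
    then show "(\<integral>w. F' (?past \<omega>, w) \<partial>\<kappa>) = (\<integral>\<omega>'. F (?past \<omega>) (X 0 \<omega>') \<partial>M)"
      by (simp add: F'_def)
  qed
  finally show ?thesis .
qed

lemma vec_meas[measurable]: "(\<lambda>\<omega>. \<lambda>i\<in>I. X (\<sigma> i) \<omega>) \<in> M \<rightarrow>\<^sub>M PV I"
  by measurable

lemma meas_vecfun:
  assumes "finite I" "g \<in> space (PV I) \<rightarrow> space N"
  shows "(\<lambda>\<omega>. g (\<lambda>i\<in>I. X (\<sigma> i) \<omega>)) \<in> M \<rightarrow>\<^sub>M N"
  using measurable_compose[OF vec_meas PV_meas[OF assms]] by simp

lemma vec_transfer_int:
  fixes g :: "(nat \<Rightarrow> int) \<Rightarrow> real"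
  assumes "inj_on \<sigma> I" "finite I"
  shows "(\<integral>\<omega>. g (\<lambda>i\<in>I. X (\<sigma> i) \<omega>) \<partial>M) = (\<integral>\<omega>. g (\<lambda>i\<in>I. X i \<omega>) \<partial>M)"
    and "integrable M (\<lambda>\<omega>. g (\<lambda>i\<in>I. X (\<sigma> i) \<omega>)) \<longleftrightarrow> integrable M (\<lambda>\<omega>. g (\<lambda>i\<in>I. X i \<omega>))"
proof -
  have gm: "g \<in> borel_measurable (PV I)" using assms(2) by measurable
  have d1: "distr M (PV I) (\<lambda>\<omega>. \<lambda>i\<in>I. X (\<sigma> i) \<omega>) = distr M (PV I) (\<lambda>\<omega>. \<lambda>i\<in>I. X i \<omega>)"
    using vec_distr[OF assms(1)] vec_distr[of id I] by simp
  have "(\<integral>\<omega>. g (\<lambda>i\<in>I. X (\<sigma> i) \<omega>) \<partial>M) = integral\<^sup>L (distr M (PV I) (\<lambda>\<omega>. \<lambda>i\<in>I. X (\<sigma> i) \<omega>)) g"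
    by (rule integral_distr[symmetric, OF vec_meas gm])
  also have "\<dots> = integral\<^sup>L (distr M (PV I) (\<lambda>\<omega>. \<lambda>i\<in>I. X i \<omega>)) g" by (simp add: d1)
  also have "\<dots> = (\<integral>\<omega>. g (\<lambda>i\<in>I. X i \<omega>) \<partial>M)"
    using integral_distr[OF vec_meas[of id I] gm] by simp
  finally show "(\<integral>\<omega>. g (\<lambda>i\<in>I. X (\<sigma> i) \<omega>) \<partial>M) = (\<integral>\<omega>. g (\<lambda>i\<in>I. X i \<omega>) \<partial>M)" .
  have "integrable M (\<lambda>\<omega>. g (\<lambda>i\<in>I. X (\<sigma> i) \<omega>)) \<longleftrightarrow> integrable (distr M (PV I) (\<lambda>\<omega>. \<lambda>i\<in>I. X (\<sigma> i) \<omega>)) g"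
    by (rule integrable_distr_eq[symmetric, OF vec_meas gm])
  also have "\<dots> \<longleftrightarrow> integrable (distr M (PV I) (\<lambda>\<omega>. \<lambda>i\<in>I. X i \<omega>)) g" by (simp add: d1)
  also have "\<dots> \<longleftrightarrow> integrable M (\<lambda>\<omega>. g (\<lambda>i\<in>I. X i \<omega>))"
    using integrable_distr_eq[OF vec_meas[of id I] gm] by simp
  finally show "integrable M (\<lambda>\<omega>. g (\<lambda>i\<in>I. X (\<sigma> i) \<omega>)) \<longleftrightarrow> integrable M (\<lambda>\<omega>. g (\<lambda>i\<in>I. X i \<omega>))" .
qed

lemma vec_transfer_prob:
  assumes "inj_on \<sigma> I" "{v \<in> space (PV I). \<Phi> v} \<in> sets (PV I)"
  shows "prob {\<omega> \<in> space M. \<Phi> (\<lambda>i\<in>I. X (\<sigma> i) \<omega>)} = prob {\<omega> \<in> space M. \<Phi> (\<lambda>i\<in>I. X i \<omega>)}"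
proof -
  have d1: "distr M (PV I) (\<lambda>\<omega>. \<lambda>i\<in>I. X (\<sigma> i) \<omega>) = distr M (PV I) (\<lambda>\<omega>. \<lambda>i\<in>I. X i \<omega>)"
    using vec_distr[OF assms(1)] vec_distr[of id I] by simp
  have pre: "(\<lambda>\<omega>. \<lambda>i\<in>I. X (\<tau> i) \<omega>) -` {v \<in> space (PV I). \<Phi> v} \<inter> space M = {\<omega> \<in> space M. \<Phi> (\<lambda>i\<in>I. X (\<tau> i) \<omega>)}" for \<tau>
    by (auto simp: space_PiM)
  have e: "measure (distr M (PV I) (\<lambda>\<omega>. \<lambda>i\<in>I. X (\<tau> i) \<omega>)) {v \<in> space (PV I). \<Phi> v} = prob {\<omega> \<in> space M. \<Phi> (\<lambda>i\<in>I. X (\<tau> i) \<omega>)}" for \<tau>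
    by (subst pre[symmetric]) (rule measure_distr[OF vec_meas assms(2)])
  show ?thesis using e[of \<sigma>] e[of id] d1 by simp
qed

lemma PV_sets: "finite I \<Longrightarrow> {v \<in> space (PV I). \<Phi> v} \<in> sets (PV I)"
  by (rule sets.countable) (auto simp: PV_single intro: countable_subset[OF _ PV_countable])

lemma Mn_meas[measurable]: "(\<lambda>\<omega>. Mv n (\<lambda>i. X i \<omega>)) \<in> M \<rightarrow>\<^sub>M count_space UNIV"
proof -
  have "(\<lambda>\<omega>. Mv n (\<lambda>i\<in>{..<n}. X (id i) \<omega>)) \<in> M \<rightarrow>\<^sub>M count_space UNIV"
    by (rule meas_vecfun) auto
  moreover have "Mv n (\<lambda>i\<in>{..<n}. X (id i) \<omega>) = Mv n (\<lambda>i. X i \<omega>)" for \<omega>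
    by (rule Mv_cong) simp
  ultimately show ?thesis by simp
qed

lemma Sn_meas[measurable]: "(\<lambda>\<omega>. Sv n (\<lambda>i. X i \<omega>)) \<in> M \<rightarrow>\<^sub>M count_space UNIV"
  unfolding Sv_def by measurable

lemma int_Xi: "(\<integral>\<omega>. f (X i \<omega>) \<partial>M) = (\<integral>\<omega>. (f (X 0 \<omega>) :: real) \<partial>M)"
proof -
  have "(\<integral>\<omega>. f (X i \<omega>) \<partial>M) = integral\<^sup>L (distr M (count_space UNIV) (X i)) f"
    by (rule integral_distr[symmetric]) auto
  also have "\<dots> = integral\<^sup>L (distr M (count_space UNIV) (X 0)) f" by (simp add: distr_Xi)
  also have "\<dots> = (\<integral>\<omega>. f (X 0 \<omega>) \<partial>M)" by (rule integral_distr) auto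
  finally show ?thesis .
qed

lemma integrable_Xi: "integrable M (\<lambda>\<omega>. f (X i \<omega>)) \<longleftrightarrow> integrable M (\<lambda>\<omega>. (f (X 0 \<omega>) :: real))"
proof -
  have "integrable M (\<lambda>\<omega>. f (X i \<omega>)) \<longleftrightarrow> integrable (distr M (count_space UNIV) (X i)) f"
    by (rule integrable_distr_eq[symmetric]) auto
  also have "\<dots> \<longleftrightarrow> integrable (distr M (count_space UNIV) (X 0)) f" by (simp add: distr_Xi)
  also have "\<dots> \<longleftrightarrow> integrable M (\<lambda>\<omega>. f (X 0 \<omega>))" by (rule integrable_distr_eq) auto
  finally show ?thesis .
qed

lemma prob_Xi: "prob {\<omega> \<in> space M. X i \<omega> \<in> A} = prob {\<omega> \<in> space M. X 0 \<omega> \<in> A}"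
proof -
  have "prob {\<omega> \<in> space M. X i \<omega> \<in> A} = measure (distr M (count_space UNIV) (X i)) A"
    by (subst measure_distr) (auto intro!: arg_cong[where f=prob])
  also have "\<dots> = measure (distr M (count_space UNIV) (X 0)) A" by (simp add: distr_Xi)
  also have "\<dots> = prob {\<omega> \<in> space M. X 0 \<omega> \<in> A}"
    by (subst measure_distr) (auto intro!: arg_cong[where f=prob])
  finally show ?thesis .
qed

lemma fX_meas: "(\<lambda>\<omega>. (f (X i \<omega>) :: real)) \<in> borel_measurable M"
  by (rule measurable_compose[OF X_meas]) (simp add: measurable_count_space_eq1)

lemma tail_nat: "prob {\<omega> \<in> space M. X 0 \<omega> \<le> - int k} = \<xi> * r ^ k"
  using tail[of "- int k"] by simp

lemma point_nat: "prob {\<omega> \<in> space M. X 0 \<omega> = - int k} = \<xi> * (1 - r) * r ^ k"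
proof -
  have "{\<omega> \<in> space M. X 0 \<omega> \<le> - int k} = {\<omega> \<in> space M. X 0 \<omega> = - int k} \<union> {\<omega> \<in> space M. X 0 \<omega> \<le> - int (Suc k)}"
    by auto
  moreover have "prob ({\<omega> \<in> space M. X 0 \<omega> = - int k} \<union> {\<omega> \<in> space M. X 0 \<omega> \<le> - int (Suc k)}) = prob {\<omega> \<in> space M. X 0 \<omega> = - int k} + prob {\<omega> \<in> space M. X 0 \<omega> \<le> - int (Suc k)}"
  proof (rule finite_measure_Union)
    show "{\<omega> \<in> space M. X 0 \<omega> = - int k} \<in> sets M" by measurable
    show "{\<omega> \<in> space M. X 0 \<omega> \<le> - int (Suc k)} \<in> sets M" by measurable
  qed auto
  ultimately have "prob {\<omega> \<in> space M. X 0 \<omega> \<le> - int k} = prob {\<omega> \<in> space M. X 0 \<omega> = - int k} + prob {\<omega> \<in> space M. X 0 \<omega> \<le> - int (Suc k)}"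
    by simp
  then show ?thesis using tail_nat[of k] tail_nat[of "Suc k"] by (simp add: algebra_simps)
qed

lemma point_le: "0 \<le> h \<Longrightarrow> prob {\<omega> \<in> space M. X 0 \<omega> = - h} = (1 - r) * prob {\<omega> \<in> space M. X 0 \<omega> \<le> - h}"
  using point_nat[of "nat h"] tail_nat[of "nat h"] by simp

lemma pos_prob: "prob {\<omega> \<in> space M. 0 < X 0 \<omega>} = 1 - \<xi>"
proof -
  have "{\<omega> \<in> space M. 0 < X 0 \<omega>} = space M - {\<omega> \<in> space M. X 0 \<omega> \<le> 0}" by auto
  then show ?thesis using prob_compl[of "{\<omega> \<in> space M. X 0 \<omega> \<le> 0}"] tail[of 0] by simp
qed

lemma negpart:
  shows "integrable M (\<lambda>\<omega>. real_of_int (max 0 (- X 0 \<omega> - int m)))"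
    and "(\<integral>\<omega>. real_of_int (max 0 (- X 0 \<omega> - int m)) \<partial>M) = \<xi> * r ^ Suc m / (1 - r)"
proof -
  define f where "f k \<omega> = (indicator {\<omega> \<in> space M. X 0 \<omega> \<le> - int (Suc (m + k))} \<omega> :: real)" for k \<omega>
  have fint: "integrable M (f k)" for k
    unfolding f_def by (intro integrable_real_indicator) (auto simp: less_top[symmetric] emeasure_finite)
  have fval: "integral\<^sup>L M (f k) = \<xi> * r ^ Suc m * r ^ k" for k
  proof -
    have "integral\<^sup>L M (f k) = prob {\<omega> \<in> space M. X 0 \<omega> \<le> - int (Suc (m + k))}"
      unfolding f_def by (simp add: Int_absorb2)
    also have "\<dots> = \<xi> * r ^ Suc m * r ^ k" using tail_nat[of "Suc (m + k)"] by (simp add: power_add mult.assoc)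
    finally show ?thesis .
  qed
  have fnn: "0 \<le> f k \<omega>" for k \<omega> by (simp add: f_def)
  have sums: "(\<lambda>k. f k \<omega>) sums real_of_int (max 0 (- X 0 \<omega> - int m))" if \<omega>: "\<omega> \<in> space M" for \<omega>
  proof -
    define N where "N = nat (- X 0 \<omega> - int m)"
    have fk: "f k \<omega> = (if k < N then 1 else 0)" for k
      using \<omega> by (auto simp: f_def N_def)
    have "(\<lambda>k. f k \<omega>) sums (\<Sum>k\<in>{..<N}. f k \<omega>)"
      by (rule sums_finite) (auto simp: fk)
    also have "(\<Sum>k\<in>{..<N}. f k \<omega>) = real N" by (simp add: fk)
    also have "real N = real_of_int (max 0 (- X 0 \<omega> - int m))" by (simp add: N_def)
    finally show ?thesis .
  qed
  have gs: "(\<lambda>k. \<xi> * r ^ Suc m * r ^ k) sums (\<xi> * r ^ Suc m / (1 - r))"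
    using sums_mult[OF geometric_sums[of r], of "\<xi> * r ^ Suc m"] rr by (simp add: divide_simps)
  have A: "integrable M (\<lambda>\<omega>. \<Sum>k. f k \<omega>)" and B: "(\<integral>\<omega>. (\<Sum>k. f k \<omega>) \<partial>M) = (\<Sum>k. integral\<^sup>L M (f k))"
  proof -
    have c1: "AE \<omega> in M. summable (\<lambda>k. norm (f k \<omega>))"
      using sums by (auto simp: fnn sums_iff)
    have c2: "summable (\<lambda>k. \<integral>\<omega>. norm (f k \<omega>) \<partial>M)"
      using gs fval by (simp add: fnn sums_iff)
    show "integrable M (\<lambda>\<omega>. \<Sum>k. f k \<omega>)" by (rule integrable_suminf[OF fint c1 c2])
    show "(\<integral>\<omega>. (\<Sum>k. f k \<omega>) \<partial>M) = (\<Sum>k. integral\<^sup>L M (f k))" by (rule integral_suminf[OF fint c1 c2])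
  qed
  have eq: "\<And>\<omega>. \<omega> \<in> space M \<Longrightarrow> (\<Sum>k. f k \<omega>) = real_of_int (max 0 (- X 0 \<omega> - int m))"
    using sums by (simp add: sums_iff)
  show "integrable M (\<lambda>\<omega>. real_of_int (max 0 (- X 0 \<omega> - int m)))"
  proof (rule Bochner_Integration.integrable_cong[OF refl, THEN iffD1, OF _ A])
    fix x assume "x \<in> space M" then show "(\<Sum>k. f k x) = real_of_int (max 0 (- X 0 x - int m))" by (rule eq)
  qed
  have "(\<integral>\<omega>. real_of_int (max 0 (- X 0 \<omega> - int m)) \<partial>M) = (\<integral>\<omega>. (\<Sum>k. f k \<omega>) \<partial>M)"
    by (rule Bochner_Integration.integral_cong[OF refl eq[symmetric]])
  also have "\<dots> = (\<Sum>k. \<xi> * r ^ Suc m * r ^ k)" by (simp add: B fval)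
  also have "\<dots> = \<xi> * r ^ Suc m / (1 - r)" using gs by (simp add: sums_iff)
  finally show "(\<integral>\<omega>. real_of_int (max 0 (- X 0 \<omega> - int m)) \<partial>M) = \<xi> * r ^ Suc m / (1 - r)" .
qed

definition mean where "mean = (\<integral>\<omega>. real_of_int (X 0 \<omega>) \<partial>M)"

lemma pospart:
  shows "integrable M (\<lambda>\<omega>. real_of_int (max 0 (X 0 \<omega>)))"
    and "(\<integral>\<omega>. real_of_int (max 0 (X 0 \<omega>)) \<partial>M) = mean + \<xi> * r / (1 - r)"
proof -
  have eq: "real_of_int (max 0 (X 0 \<omega>)) = real_of_int (X 0 \<omega>) + real_of_int (max 0 (- X 0 \<omega> - int 0))" for \<omega>
    by simp
  show "integrable M (\<lambda>\<omega>. real_of_int (max 0 (X 0 \<omega>)))"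
    unfolding eq by (intro Bochner_Integration.integrable_add intX negpart(1))
  show "(\<integral>\<omega>. real_of_int (max 0 (X 0 \<omega>)) \<partial>M) = mean + \<xi> * r / (1 - r)"
    unfolding eq using negpart[of 0] intX by (simp add: mean_def)
qed

definition Fp :: "real \<Rightarrow> real" where
  "Fp s = (\<Sum>x. s ^ Suc x * prob {\<omega> \<in> space M. X 0 \<omega> = int (Suc x)})"
definition u :: "real \<Rightarrow> int \<Rightarrow> real" where "u s x = (if 0 < x then s ^ nat x else 0)"
definition w :: "real \<Rightarrow> int \<Rightarrow> real" where "w s x = (if 0 < x then (\<Sum>j<nat x. s ^ j) else 0)"
definition W :: "real \<Rightarrow> real" where "W s = (\<integral>\<omega>. w s (X 0 \<omega>) \<partial>M)"

lemma Fp_int: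
  assumes s: "0 \<le> s" "s \<le> 1"
  shows "Fp s = (\<integral>\<omega>. u s (X 0 \<omega>) \<partial>M)"
proof -
  define f where "f x \<omega> = s ^ Suc x * (indicator {\<omega> \<in> space M. X 0 \<omega> = int (Suc x)} \<omega> :: real)" for x \<omega>
  have fint: "integrable M (f x)" for x
    unfolding f_def by (intro integrable_mult_right integrable_real_indicator) (auto simp: less_top[symmetric] emeasure_finite)
  have fval: "integral\<^sup>L M (f x) = s ^ Suc x * prob {\<omega> \<in> space M. X 0 \<omega> = int (Suc x)}" for x
    unfolding f_def by (simp add: Int_absorb2)
  have fnn: "0 \<le> f x \<omega>" for x \<omega> using s by (simp add: f_def)
  have sums: "(\<lambda>x. f x \<omega>) sums u s (X 0 \<omega>)" if \<omega>: "\<omega> \<in> space M" for \<omega>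
  proof (cases "0 < X 0 \<omega>")
    case True
    define i where "i = nat (X 0 \<omega>) - 1"
    have "f x \<omega> = (if x = i then s ^ Suc i else 0)" for x
      using \<omega> True by (auto simp: f_def i_def simp del: power_Suc)
    moreover have "(\<lambda>x. if x = i then s ^ Suc i else 0) sums s ^ Suc i"
      using sums_single[of i "\<lambda>_. s ^ Suc i"] by simp
    moreover have "s ^ Suc i = u s (X 0 \<omega>)" using True by (simp add: u_def i_def Suc_diff_1)
    ultimately show ?thesis by simp
  next
    case False
    then have "f x \<omega> = 0" for x using \<omega> by (auto simp: f_def)
    then show ?thesis using False by (simp add: u_def)
  qed
  have dis: "disjoint_family (\<lambda>x. {\<omega> \<in> space M. X 0 \<omega> = int (Suc x)})"
    by (auto simp: disjoint_family_on_def)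
  have "(\<lambda>x. prob {\<omega> \<in> space M. X 0 \<omega> = int (Suc x)}) sums prob (\<Union>x. {\<omega> \<in> space M. X 0 \<omega> = int (Suc x)})"
    by (rule measure_UNION[OF _ dis]) (auto simp: emeasure_finite)
  then have sp: "summable (\<lambda>x. prob {\<omega> \<in> space M. X 0 \<omega> = int (Suc x)})" by (simp add: sums_iff)
  have c1: "AE \<omega> in M. summable (\<lambda>x. norm (f x \<omega>))"
    using sums by (auto simp: fnn sums_iff)
  have c2: "summable (\<lambda>x. \<integral>\<omega>. norm (f x \<omega>) \<partial>M)"
  proof (rule summable_comparison_test[OF _ sp])
    show "\<exists>N. \<forall>n\<ge>N. norm (\<integral>\<omega>. norm (f n \<omega>) \<partial>M) \<le> prob {\<omega> \<in> space M. X 0 \<omega> = int (Suc n)}"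
    proof (intro exI[of _ 0] allI impI)
      fix n :: nat
      have nf: "(\<lambda>\<omega>. norm (f n \<omega>)) = f n" using fnn by (auto simp: fun_eq_iff)
      have "s ^ Suc n \<le> 1" using s by (intro power_le_one) auto
      then have "s ^ Suc n * prob {\<omega> \<in> space M. X 0 \<omega> = int (Suc n)} \<le> prob {\<omega> \<in> space M. X 0 \<omega> = int (Suc n)}"
        using s by (intro mult_left_le_one_le) auto
      moreover have "0 \<le> s ^ Suc n * prob {\<omega> \<in> space M. X 0 \<omega> = int (Suc n)}" using s by simp
      ultimately show "norm (\<integral>\<omega>. norm (f n \<omega>) \<partial>M) \<le> prob {\<omega> \<in> space M. X 0 \<omega> = int (Suc n)}"
        unfolding nf fval by simp
    qed
  qed
  have B: "(\<integral>\<omega>. (\<Sum>x. f x \<omega>) \<partial>M) = (\<Sum>x. integral\<^sup>L M (f x))"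
    by (rule integral_suminf[OF fint c1 c2])
  have eq: "\<And>\<omega>. \<omega> \<in> space M \<Longrightarrow> (\<Sum>x. f x \<omega>) = u s (X 0 \<omega>)"
    using sums by (simp add: sums_iff)
  have "(\<integral>\<omega>. u s (X 0 \<omega>) \<partial>M) = (\<integral>\<omega>. (\<Sum>x. f x \<omega>) \<partial>M)"
    by (rule Bochner_Integration.integral_cong[OF refl eq[symmetric]])
  also have "\<dots> = Fp s" by (simp add: B fval Fp_def)
  finally show ?thesis ..
qed

lemma w_bound: "0 \<le> s \<Longrightarrow> s \<le> 1 \<Longrightarrow> 0 \<le> w s x \<and> w s x \<le> real_of_int (max 0 x)"
proof -
  assume s: "0 \<le> s" "s \<le> 1"
  have h: "(\<Sum>j<n. s ^ j) \<le> real n" for n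
  proof -
    have "(\<Sum>j<n. s ^ j) \<le> (\<Sum>j<n. 1::real)"
      using s by (intro sum_mono power_le_one) auto
    then show ?thesis by simp
  qed
  show ?thesis
  proof (cases "0 < x")
    case True
    have "0 \<le> (\<Sum>j<nat x. s ^ j)" using s by (intro sum_nonneg) simp
    moreover have "(\<Sum>j<nat x. s ^ j) \<le> real_of_int (max 0 x)" using h[of "nat x"] True by simp
    ultimately show ?thesis using True by (simp add: w_def)
  next
    case False then show ?thesis by (simp add: w_def)
  qed
qed

lemma W_integrable: "0 \<le> s \<Longrightarrow> s \<le> 1 \<Longrightarrow> integrable M (\<lambda>\<omega>. w s (X 0 \<omega>))"
proof -
  assume s: "0 \<le> s" "s \<le> 1"
  show ?thesis
  proof (rule Bochner_Integration.integrable_bound[OF pospart(1) fX_meas])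
    show "AE x in M. norm (w s (X 0 x)) \<le> norm (real_of_int (max 0 (X 0 x)))"
    proof (rule AE_I2)
      fix x show "norm (w s (X 0 x)) \<le> norm (real_of_int (max 0 (X 0 x)))"
        using w_bound[OF s, of "X 0 x"] by auto
    qed
  qed
qed

lemma u_w: "u s x = (if 0 < x then 1 else 0) - (1 - s) * w s x"
proof -
  have h: "s ^ n = 1 - (1 - s) * (\<Sum>j<n. s ^ j)" for n
    using one_diff_power_eq[of s n] by linarith
  show ?thesis
  proof (cases "0 < x")
    case True
    then show ?thesis unfolding u_def w_def using h[of "nat x"] by (simp only: if_True)
  next
    case False then show ?thesis by (simp add: u_def w_def)
  qed
qed

lemma Fp_W: "0 \<le> s \<Longrightarrow> s \<le> 1 \<Longrightarrow> Fp s = (1 - \<xi>) - (1 - s) * W s"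
proof -
  assume s: "0 \<le> s" "s \<le> 1"
  have i1: "(\<integral>\<omega>. (if 0 < X 0 \<omega> then 1 else 0) \<partial>M) = 1 - \<xi>"
  proof -
    have "(\<integral>\<omega>. (if 0 < X 0 \<omega> then 1 else 0) \<partial>M) = (\<integral>\<omega>. indicator {\<omega> \<in> space M. 0 < X 0 \<omega>} \<omega> \<partial>M)"
      by (rule Bochner_Integration.integral_cong) auto
    also have "\<dots> = 1 - \<xi>" by (simp add: Int_absorb2 pos_prob)
    finally show ?thesis .
  qed
  have int1: "integrable M (\<lambda>\<omega>. (if 0 < X 0 \<omega> then 1 else 0 :: real))"
    by (rule integrable_const_bound[where B=1]) (auto intro: fX_meas)
  have "Fp s = (\<integral>\<omega>. (if 0 < X 0 \<omega> then 1 else 0) - (1 - s) * w s (X 0 \<omega>) \<partial>M)"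
    unfolding Fp_int[OF s] u_w ..
  also have "\<dots> = (1 - \<xi>) - (1 - s) * W s"
    using int1 W_integrable[OF s] by (simp add: i1 W_def)
  finally show ?thesis .
qed

definition sk :: "nat \<Rightarrow> real" where "sk k = 1 - inverse (real (Suc k)) / 2"

lemma sk_bounds: "1/2 \<le> sk k" "sk k < 1"
proof -
  have "0 < inverse (real (Suc k))" by simp
  moreover have "inverse (real (Suc k)) \<le> 1" using le_imp_inverse_le[of 1 "real (Suc k)"] by simp
  ultimately show "1/2 \<le> sk k" "sk k < 1" by (auto simp: sk_def)
qed

lemma sk_lim: "sk \<longlonglongrightarrow> 1"
proof -
  have "(\<lambda>k. 1 - inverse (real (Suc k)) / 2) \<longlonglongrightarrow> 1 - 0 / 2"
    by (intro tendsto_intros LIMSEQ_inverse_real_of_nat) simp_all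
  then show ?thesis by (simp add: sk_def[abs_def])
qed

lemma W_lim: "(\<lambda>k. W (sk k)) \<longlonglongrightarrow> mean + \<xi> * r / (1 - r)"
proof -
  have "(\<lambda>k. \<integral>\<omega>. w (sk k) (X 0 \<omega>) \<partial>M) \<longlonglongrightarrow> (\<integral>\<omega>. real_of_int (max 0 (X 0 \<omega>)) \<partial>M)"
  proof (rule integral_dominated_convergence[OF fX_meas _ pospart(1)])
    show "\<And>k. (\<lambda>\<omega>. w (sk k) (X 0 \<omega>)) \<in> borel_measurable M" by (rule fX_meas)
    show "AE \<omega> in M. (\<lambda>k. w (sk k) (X 0 \<omega>)) \<longlonglongrightarrow> real_of_int (max 0 (X 0 \<omega>))"
    proof (rule AE_I2)
      fix \<omega>
      show "(\<lambda>k. w (sk k) (X 0 \<omega>)) \<longlonglongrightarrow> real_of_int (max 0 (X 0 \<omega>))"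
      proof (cases "0 < X 0 \<omega>")
        case True
        have "(\<lambda>k. \<Sum>j<nat (X 0 \<omega>). sk k ^ j) \<longlonglongrightarrow> (\<Sum>j<nat (X 0 \<omega>). 1 ^ j)"
          by (intro tendsto_intros sk_lim)
        then show ?thesis using True by (simp add: w_def)
      next
        case False
        then show ?thesis by (simp add: w_def)
      qed
    qed
    show "AE \<omega> in M. norm (w (sk k) (X 0 \<omega>)) \<le> real_of_int (max 0 (X 0 \<omega>))" for k
    proof (rule AE_I2)
      fix \<omega>
      have "0 \<le> sk k" "sk k \<le> 1" using sk_bounds[of k] by auto
      from w_bound[OF this, of "X 0 \<omega>"]
      show "norm (w (sk k) (X 0 \<omega>)) \<le> real_of_int (max 0 (X 0 \<omega>))" by simp
    qed
  qed
  then show ?thesis by (simp add: W_def pospart(2))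
qed

lemma inj_rev1: "inj_on (\<lambda>i. n - i) {..<Suc n}"
  by (auto simp: inj_on_def)

lemma inj_rev2: "inj_on (\<lambda>i. n - Suc i) {..<n}"
  by (auto simp: inj_on_def)

lemma lindley:
  fixes f :: "int \<Rightarrow> real"
  assumes int1: "integrable M (\<lambda>\<omega>. f (Mv (Suc n) (\<lambda>i. X i \<omega>)))"
  shows "(\<integral>\<omega>. f (Mv (Suc n) (\<lambda>i. X i \<omega>)) \<partial>M) = (\<integral>\<omega>. (\<integral>\<omega>'. f (max 0 (X 0 \<omega>' + Mv n (\<lambda>i. X i \<omega>))) \<partial>M) \<partial>M)"
proof -
  define g where "g v = f (Mv (Suc n) v)" for v
  define F where "F v x = f (max 0 (x + Mv n (\<lambda>i. v (n - Suc i))))" for v x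
  define H where "H v = (\<integral>\<omega>'. f (max 0 (X 0 \<omega>' + Mv n v)) \<partial>M)" for v
  have e1: "f (Mv (Suc n) (\<lambda>i. X i \<omega>)) = g (\<lambda>i\<in>{..<Suc n}. X i \<omega>)" for \<omega>
    unfolding g_def by (intro arg_cong[where f=f] Mv_cong) simp
  have e2: "g (\<lambda>i\<in>{..<Suc n}. X (n - i) \<omega>) = F (\<lambda>i\<in>{..<n}. X i \<omega>) (X n \<omega>)" for \<omega>
    unfolding g_def F_def Mv_Suc
    by (intro arg_cong[where f=f] arg_cong[where f="max 0"] arg_cong2[where f="(+)"] Mv_cong) auto
  have e3: "(\<integral>\<omega>'. F (\<lambda>i\<in>{..<n}. X i \<omega>) (X 0 \<omega>') \<partial>M) = H (\<lambda>i\<in>{..<n}. X (n - Suc i) \<omega>)" for \<omega>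
    unfolding F_def H_def
    by (intro Bochner_Integration.integral_cong refl arg_cong[where f=f] arg_cong[where f="max 0"] arg_cong2[where f="(+)"] Mv_cong) auto
  have e4: "H (\<lambda>i\<in>{..<n}. X i \<omega>) = (\<integral>\<omega>'. f (max 0 (X 0 \<omega>' + Mv n (\<lambda>i. X i \<omega>))) \<partial>M)" for \<omega>
    unfolding H_def
    by (intro Bochner_Integration.integral_cong refl arg_cong[where f=f] arg_cong[where f="max 0"] arg_cong2[where f="(+)"] Mv_cong) auto
  have "(\<integral>\<omega>. f (Mv (Suc n) (\<lambda>i. X i \<omega>)) \<partial>M) = (\<integral>\<omega>. g (\<lambda>i\<in>{..<Suc n}. X i \<omega>) \<partial>M)"
    by (simp add: e1)
  also have "\<dots> = (\<integral>\<omega>. g (\<lambda>i\<in>{..<Suc n}. X (n - i) \<omega>) \<partial>M)"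
    by (rule vec_transfer_int(1)[symmetric, OF inj_rev1]) simp
  also have "\<dots> = (\<integral>\<omega>. F (\<lambda>i\<in>{..<n}. X i \<omega>) (X n \<omega>) \<partial>M)"
    by (simp add: e2)
  also have "\<dots> = (\<integral>\<omega>. (\<integral>\<omega>'. F (\<lambda>i\<in>{..<n}. X i \<omega>) (X 0 \<omega>') \<partial>M) \<partial>M)"
  proof (rule split_last)
    have "integrable M (\<lambda>\<omega>. g (\<lambda>i\<in>{..<Suc n}. X i \<omega>))" using int1 by (simp add: e1)
    then have "integrable M (\<lambda>\<omega>. g (\<lambda>i\<in>{..<Suc n}. X (n - i) \<omega>))"
      using vec_transfer_int(2)[OF inj_rev1, of n g] by simp
    then show "integrable M (\<lambda>\<omega>. F (\<lambda>i\<in>{..<n}. X i \<omega>) (X n \<omega>))" by (simp add: e2)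
  qed
  also have "\<dots> = (\<integral>\<omega>. H (\<lambda>i\<in>{..<n}. X (n - Suc i) \<omega>) \<partial>M)"
    by (simp add: e3)
  also have "\<dots> = (\<integral>\<omega>. H (\<lambda>i\<in>{..<n}. X i \<omega>) \<partial>M)"
    by (rule vec_transfer_int(1)[OF inj_rev2]) simp
  also have "\<dots> = (\<integral>\<omega>. (\<integral>\<omega>'. f (max 0 (X 0 \<omega>' + Mv n (\<lambda>i. X i \<omega>))) \<partial>M) \<partial>M)"
    by (simp add: e4)
  finally show ?thesis .
qed

lemma absX_int: "integrable M (\<lambda>\<omega>. real_of_int \<bar>X i \<omega>\<bar>)"
proof -
  have "integrable M (\<lambda>\<omega>. \<bar>real_of_int (X 0 \<omega>)\<bar>)" using intX by simp
  then have "integrable M (\<lambda>\<omega>. real_of_int \<bar>X 0 \<omega>\<bar>)" by simp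
  then show ?thesis using integrable_Xi[of "\<lambda>x. real_of_int \<bar>x\<bar>" i] by simp
qed

lemma Mn_int: "integrable M (\<lambda>\<omega>. real_of_int (Mv n (\<lambda>i. X i \<omega>)))"
proof (rule Bochner_Integration.integrable_bound)
  show "integrable M (\<lambda>\<omega>. \<Sum>i<n. real_of_int \<bar>X i \<omega>\<bar>)"
    by (intro Bochner_Integration.integrable_sum absX_int)
  show "(\<lambda>\<omega>. real_of_int (Mv n (\<lambda>i. X i \<omega>))) \<in> borel_measurable M"
    by (rule comp_cnt[OF Mn_meas])
  show "AE \<omega> in M. norm (real_of_int (Mv n (\<lambda>i. X i \<omega>))) \<le> norm (\<Sum>i<n. real_of_int \<bar>X i \<omega>\<bar>)"
  proof (rule AE_I2)
    fix \<omega>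
    have "0 \<le> Mv n (\<lambda>i. X i \<omega>)" "Mv n (\<lambda>i. X i \<omega>) \<le> (\<Sum>i<n. \<bar>X i \<omega>\<bar>)"
      using Mv_ge0 Mv_abs by auto
    then have a: "real_of_int (Mv n (\<lambda>i. X i \<omega>)) \<le> real_of_int (\<Sum>i<n. \<bar>X i \<omega>\<bar>)" "0 \<le> real_of_int (Mv n (\<lambda>i. X i \<omega>))"
      by (simp_all only: of_int_le_iff of_int_0_le_iff)
    have b: "real_of_int (\<Sum>i<n. \<bar>X i \<omega>\<bar>) = (\<Sum>i<n. real_of_int \<bar>X i \<omega>\<bar>)" by simp
    show "norm (real_of_int (Mv n (\<lambda>i. X i \<omega>))) \<le> norm (\<Sum>i<n. real_of_int \<bar>X i \<omega>\<bar>)"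
      using a b by (simp only: real_norm_def)
  qed
qed

lemma hid: "0 \<le> m \<Longrightarrow> (\<integral>\<omega>. real_of_int (max 0 (X 0 \<omega> + m)) \<partial>M) = mean + real_of_int m + \<xi> * r ^ Suc (nat m) / (1 - r)"
proof -
  assume m: "0 \<le> m"
  have eq: "real_of_int (max 0 (X 0 \<omega> + m)) = real_of_int (X 0 \<omega>) + real_of_int m + real_of_int (max 0 (- X 0 \<omega> - int (nat m)))" for \<omega>
    using m by simp
  show ?thesis unfolding eq using intX negpart[of "nat m"] m by (simp add: mean_def prob_space)
qed

definition g :: "nat \<Rightarrow> real \<Rightarrow> real" where
  "g n s = (\<integral>\<omega>. s ^ nat (Mv n (\<lambda>i. X i \<omega>)) \<partial>M)"

lemma pow_int: "0 \<le> (s::real) \<Longrightarrow> s \<le> 1 \<Longrightarrow> integrable M (\<lambda>\<omega>. s ^ nat (Mv n (\<lambda>i. X i \<omega>)))"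
proof -
  assume s: "0 \<le> s" "s \<le> 1"
  show ?thesis
  proof (rule integrable_const_bound[where B=1])
    show "AE \<omega> in M. norm (s ^ nat (Mv n (\<lambda>i. X i \<omega>))) \<le> 1"
      using s by (intro AE_I2) (simp add: power_le_one)
    show "(\<lambda>\<omega>. s ^ nat (Mv n (\<lambda>i. X i \<omega>))) \<in> borel_measurable M" by (rule comp_cnt[OF Mn_meas])
  qed
qed

lemma drift_bound: "\<xi> * r / (1 - r) * g n r \<ge> - mean"
proof -
  have L: "(\<integral>\<omega>. real_of_int (Mv (Suc n) (\<lambda>i. X i \<omega>)) \<partial>M) = (\<integral>\<omega>. (\<integral>\<omega>'. real_of_int (max 0 (X 0 \<omega>' + Mv n (\<lambda>i. X i \<omega>))) \<partial>M) \<partial>M)"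
    by (rule lindley[where f=real_of_int, OF Mn_int])
  also have "\<dots> = (\<integral>\<omega>. mean + real_of_int (Mv n (\<lambda>i. X i \<omega>)) + \<xi> * r / (1 - r) * r ^ nat (Mv n (\<lambda>i. X i \<omega>)) \<partial>M)"
    by (intro Bochner_Integration.integral_cong refl) (simp add: hid Mv_ge0 field_simps)
  also have "\<dots> = mean + (\<integral>\<omega>. real_of_int (Mv n (\<lambda>i. X i \<omega>)) \<partial>M) + \<xi> * r / (1 - r) * g n r"
    using Mn_int[of n] pow_int[of r n] rr by (simp add: g_def prob_space)
  finally have eq: "(\<integral>\<omega>. real_of_int (Mv (Suc n) (\<lambda>i. X i \<omega>)) \<partial>M) = mean + (\<integral>\<omega>. real_of_int (Mv n (\<lambda>i. X i \<omega>)) \<partial>M) + \<xi> * r / (1 - r) * g n r" .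
  have "(\<integral>\<omega>. real_of_int (Mv n (\<lambda>i. X i \<omega>)) \<partial>M) \<le> (\<integral>\<omega>. real_of_int (Mv (Suc n) (\<lambda>i. X i \<omega>)) \<partial>M)"
    by (intro integral_mono Mn_int) (simp add: Mv_mono)
  then show ?thesis using eq by linarith
qed

lemma pt_decomp:
  "s ^ nat (max 0 (x + int m)) = s ^ m * u s x + (\<Sum>k<m. s ^ (m - k) * (if x = - int k then 1 else 0)) + (if x \<le> - int m then 1 else 0)"
proof -
  consider "0 < x" | "x \<le> 0" "- int m < x" | "x \<le> - int m" by linarith
  then show ?thesis
  proof cases
    case 1
    have "(\<Sum>k<m. s ^ (m - k) * (if x = - int k then 1 else 0)) = 0"
      using 1 by (intro sum.neutral) auto
    moreover have "nat (max 0 (x + int m)) = nat x + m" using 1 by simp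
    ultimately show ?thesis using 1 by (simp add: u_def power_add)
  next
    case 2
    define k0 where "k0 = nat (- x)"
    have k0: "k0 < m" "x = - int k0" using 2 by (auto simp: k0_def)
    have "(\<Sum>k<m. s ^ (m - k) * (if x = - int k then 1 else 0)) = (\<Sum>k<m. if k = k0 then s ^ (m - k) else 0)"
      using k0 by (intro sum.cong) auto
    also have "\<dots> = s ^ (m - k0)" using k0 by (simp add: sum.delta)
    finally have "(\<Sum>k<m. s ^ (m - k) * (if x = - int k then 1 else 0)) = s ^ (m - k0)" .
    moreover have "nat (max 0 (x + int m)) = m - k0" using k0 by simp
    ultimately show ?thesis using 2 k0 by (simp add: u_def)
  next
    case 3
    have "(\<Sum>k<m. s ^ (m - k) * (if x = - int k then 1 else 0)) = 0"
      using 3 by (intro sum.neutral) auto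
    then show ?thesis using 3 by (simp add: u_def)
  qed
qed

lemma int_ind:
  shows "integrable M (\<lambda>\<omega>. if P (X 0 \<omega>) then 1 else (0::real))"
    and "(\<integral>\<omega>. (if P (X 0 \<omega>) then 1 else 0) \<partial>M) = prob {\<omega> \<in> space M. P (X 0 \<omega>)}"
proof -
  show "integrable M (\<lambda>\<omega>. if P (X 0 \<omega>) then 1 else (0::real))"
    by (rule integrable_const_bound[where B=1]) (auto intro: fX_meas)
  have "(\<integral>\<omega>. (if P (X 0 \<omega>) then 1 else 0) \<partial>M) = (\<integral>\<omega>. indicator {\<omega> \<in> space M. P (X 0 \<omega>)} \<omega> \<partial>M)"
    by (rule Bochner_Integration.integral_cong) auto
  also have "\<dots> = prob {\<omega> \<in> space M. P (X 0 \<omega>)}" by (simp add: Int_absorb2)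
  finally show "(\<integral>\<omega>. (if P (X 0 \<omega>) then 1 else 0) \<partial>M) = prob {\<omega> \<in> space M. P (X 0 \<omega>)}" .
qed

lemma u_int: "0 \<le> s \<Longrightarrow> s \<le> 1 \<Longrightarrow> integrable M (\<lambda>\<omega>. u s (X 0 \<omega>))"
  by (rule integrable_const_bound[where B=1]) (auto intro: fX_meas simp: u_def power_le_one)

lemma hs:
  assumes s: "0 \<le> s" "s \<le> 1"
  shows "(\<integral>\<omega>. s ^ nat (max 0 (X 0 \<omega> + int m)) \<partial>M) = s ^ m * Fp s + (\<Sum>k<m. s ^ (m - k) * (\<xi> * (1 - r) * r ^ k)) + \<xi> * r ^ m"
proof -
  have i2: "integrable M (\<lambda>\<omega>. \<Sum>k<m. s ^ (m - k) * (if X 0 \<omega> = - int k then 1 else 0))"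
    using int_ind(1) by (intro Bochner_Integration.integrable_sum integrable_mult_right) auto
  have v2: "(\<integral>\<omega>. (\<Sum>k<m. s ^ (m - k) * (if X 0 \<omega> = - int k then 1 else 0)) \<partial>M) = (\<Sum>k<m. s ^ (m - k) * (\<xi> * (1 - r) * r ^ k))"
    using int_ind[of "\<lambda>x. x = - int _"] by (simp add: Bochner_Integration.integral_sum point_nat)
  have "(\<integral>\<omega>. s ^ nat (max 0 (X 0 \<omega> + int m)) \<partial>M) = (\<integral>\<omega>. s ^ m * u s (X 0 \<omega>) + (\<Sum>k<m. s ^ (m - k) * (if X 0 \<omega> = - int k then 1 else 0)) + (if X 0 \<omega> \<le> - int m then 1 else 0) \<partial>M)"
    by (simp only: pt_decomp)
  also have "\<dots> = s ^ m * Fp s + (\<Sum>k<m. s ^ (m - k) * (\<xi> * (1 - r) * r ^ k)) + \<xi> * r ^ m"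
    using u_int[OF s] i2 int_ind[of "\<lambda>x. x \<le> - int m"] v2 by (simp add: Fp_int[OF s] tail_nat)
  finally show ?thesis .
qed

lemma hs_r:
  assumes s: "0 \<le> s" "s \<le> 1"
  shows "(s - r) * (\<integral>\<omega>. s ^ nat (max 0 (X 0 \<omega> + int m)) \<partial>M) = (s - r) * Fp s * s ^ m + \<xi> * (1 - r) * s * (s ^ m - r ^ m) + \<xi> * (s - r) * r ^ m"
proof -
  have "(\<Sum>k<m. s ^ (m - k) * (\<xi> * (1 - r) * r ^ k)) = \<xi> * (1 - r) * (\<Sum>k<m. s ^ (m - k) * r ^ k)"
    by (simp add: sum_distrib_left mult_ac)
  then have "(s - r) * (\<Sum>k<m. s ^ (m - k) * (\<xi> * (1 - r) * r ^ k)) = \<xi> * (1 - r) * s * (s ^ m - r ^ m)"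
    using gsum[of s r m] by (simp add: mult_ac)
  then show ?thesis unfolding hs[OF s] by (simp add: algebra_simps)
qed

lemma g_rec:
  assumes s: "0 \<le> s" "s \<le> 1"
  shows "(s - r) * g (Suc n) s = (s - r) * Fp s * g n s + \<xi> * (1 - r) * s * (g n s - g n r) + \<xi> * (s - r) * g n r"
proof -
  have "g (Suc n) s = (\<integral>\<omega>. (\<integral>\<omega>'. s ^ nat (max 0 (X 0 \<omega>' + Mv n (\<lambda>i. X i \<omega>))) \<partial>M) \<partial>M)"
    unfolding g_def by (rule lindley[where f="\<lambda>m. s ^ nat m", OF pow_int[OF s]])
  also have "\<dots> = (\<integral>\<omega>. (\<integral>\<omega>'. s ^ nat (max 0 (X 0 \<omega>' + int (nat (Mv n (\<lambda>i. X i \<omega>))))) \<partial>M) \<partial>M)"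
    by (simp add: Mv_ge0)
  finally have e: "(s - r) * g (Suc n) s = (\<integral>\<omega>. (s - r) * (\<integral>\<omega>'. s ^ nat (max 0 (X 0 \<omega>' + int (nat (Mv n (\<lambda>i. X i \<omega>))))) \<partial>M) \<partial>M)"
    by simp
  also have "\<dots> = (\<integral>\<omega>. (s - r) * Fp s * s ^ nat (Mv n (\<lambda>i. X i \<omega>)) + \<xi> * (1 - r) * s * (s ^ nat (Mv n (\<lambda>i. X i \<omega>)) - r ^ nat (Mv n (\<lambda>i. X i \<omega>))) + \<xi> * (s - r) * r ^ nat (Mv n (\<lambda>i. X i \<omega>)) \<partial>M)"
    by (simp only: hs_r[OF s])
  also have "\<dots> = (s - r) * Fp s * g n s + \<xi> * (1 - r) * s * (g n s - g n r) + \<xi> * (s - r) * g n r"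
    using pow_int[OF s, of n] pow_int[of r n] rr by (simp add: g_def)
  finally show ?thesis .
qed

definition bddS :: "'a \<Rightarrow> bool" where "bddS \<omega> = (\<exists>b. \<forall>n. Sv n (\<lambda>i. X i \<omega>) \<le> b)"
definition SupS :: "'a \<Rightarrow> int" where "SupS \<omega> = Sup (range (\<lambda>n. Sv n (\<lambda>i. X i \<omega>)))"
definition Gt :: "real \<Rightarrow> real" where
  "Gt s = (\<integral>\<omega>. (if bddS \<omega> then s ^ nat (SupS \<omega>) else 0) \<partial>M)"

lemma bddS_meas[measurable]: "Measurable.pred M bddS"
  unfolding bddS_def by measurable

lemma conv_pt:
  assumes s: "0 \<le> (s::real)" "s < 1"
  shows "(\<lambda>n. s ^ nat (Mv n (\<lambda>i. X i \<omega>))) \<longlonglongrightarrow> (if bddS \<omega> then s ^ nat (SupS \<omega>) else 0)"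
proof (cases "bddS \<omega>")
  case True
  let ?f = "\<lambda>n. Sv n (\<lambda>i. X i \<omega>)"
  have bdd: "bdd_above (range ?f)" using True by (auto simp: bddS_def bdd_above_def)
  have "SupS \<omega> \<in> range ?f" unfolding SupS_def by (rule int_Sup_mem[OF _ bdd]) auto
  then obtain k0 where k0: "SupS \<omega> = ?f k0" by auto
  have up: "?f n \<le> SupS \<omega>" for n unfolding SupS_def by (rule cSup_upper[OF _ bdd]) auto
  have ev: "Mv n (\<lambda>i. X i \<omega>) = SupS \<omega>" if "k0 \<le> n" for n
  proof (rule antisym)
    obtain k where "k \<le> n" "Mv n (\<lambda>i. X i \<omega>) = ?f k" using Mv_ex by blast
    then show "Mv n (\<lambda>i. X i \<omega>) \<le> SupS \<omega>" using up by simp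
    show "SupS \<omega> \<le> Mv n (\<lambda>i. X i \<omega>)" using k0 Sv_le_Mv[OF that] by simp
  qed
  have "(\<lambda>n. s ^ nat (Mv n (\<lambda>i. X i \<omega>))) \<longlonglongrightarrow> s ^ nat (SupS \<omega>)"
    by (rule tendsto_eventually) (unfold eventually_sequentially, intro exI[of _ k0] allI impI, simp add: ev)
  then show ?thesis using True by simp
next
  case False
  have lim: "filterlim (\<lambda>n. nat (Mv n (\<lambda>i. X i \<omega>))) at_top sequentially"
  proof (subst filterlim_at_top, intro allI)
    fix Z :: nat
    obtain k where k: "Sv k (\<lambda>i. X i \<omega>) > int Z" using False unfolding bddS_def not_ex not_all by (meson not_le)
    show "eventually (\<lambda>n. Z \<le> nat (Mv n (\<lambda>i. X i \<omega>))) sequentially"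
      unfolding eventually_sequentially
    proof (intro exI[of _ k] allI impI)
      fix n assume "k \<le> n"
      then have "Sv k (\<lambda>i. X i \<omega>) \<le> Mv n (\<lambda>i. X i \<omega>)" by (rule Sv_le_Mv)
      then show "Z \<le> nat (Mv n (\<lambda>i. X i \<omega>))" using k by linarith
    qed
  qed
  have "(\<lambda>n. s ^ nat (Mv n (\<lambda>i. X i \<omega>))) \<longlonglongrightarrow> 0"
    using filterlim_compose[OF LIMSEQ_realpow_zero[OF s] lim] by simp
  then show ?thesis using False by simp
qed

lemma Gt_meas:
  assumes s: "0 \<le> (s::real)" "s < 1"
  shows "(\<lambda>\<omega>. if bddS \<omega> then s ^ nat (SupS \<omega>) else 0) \<in> borel_measurable M"
proof (rule borel_measurable_LIMSEQ_real[where u="\<lambda>n \<omega>. s ^ nat (Mv n (\<lambda>i. X i \<omega>))"])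
  show "\<And>\<omega>. \<omega> \<in> space M \<Longrightarrow> (\<lambda>n. s ^ nat (Mv n (\<lambda>i. X i \<omega>))) \<longlonglongrightarrow> (if bddS \<omega> then s ^ nat (SupS \<omega>) else 0)"
    by (rule conv_pt[OF s])
  show "\<And>n. (\<lambda>\<omega>. s ^ nat (Mv n (\<lambda>i. X i \<omega>))) \<in> borel_measurable M"
    by (rule comp_cnt[OF Mn_meas])
qed

lemma g_lim:
  assumes s: "0 \<le> s" "s < 1"
  shows "(\<lambda>n. g n s) \<longlonglongrightarrow> Gt s"
  unfolding g_def Gt_def
proof (rule integral_dominated_convergence[where w="\<lambda>_. 1"])
  show "(\<lambda>\<omega>. if bddS \<omega> then s ^ nat (SupS \<omega>) else 0) \<in> borel_measurable M" by (rule Gt_meas[OF s])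
  show "\<And>n. (\<lambda>\<omega>. s ^ nat (Mv n (\<lambda>i. X i \<omega>))) \<in> borel_measurable M" by (rule comp_cnt[OF Mn_meas])
  show "integrable M (\<lambda>_. 1::real)" by simp
  show "AE \<omega> in M. (\<lambda>n. s ^ nat (Mv n (\<lambda>i. X i \<omega>))) \<longlonglongrightarrow> (if bddS \<omega> then s ^ nat (SupS \<omega>) else 0)"
    using conv_pt[OF s] by simp
  show "AE \<omega> in M. norm (s ^ nat (Mv n (\<lambda>i. X i \<omega>))) \<le> 1" for n
    using s by (intro AE_I2) (simp add: power_le_one)
qed

lemma Gt_eq:
  assumes s: "0 \<le> s" "s < 1"
  shows "(s - r) * Gt s = (s - r) * Fp s * Gt s + \<xi> * (1 - r) * s * (Gt s - Gt r) + \<xi> * (s - r) * Gt r"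
proof -
  have r: "0 \<le> r" "r < 1" using rr by auto
  have "(\<lambda>n. (s - r) * g (Suc n) s) \<longlonglongrightarrow> (s - r) * Gt s"
    by (intro tendsto_mult tendsto_const LIMSEQ_Suc g_lim[OF s])
  moreover have "(\<lambda>n. (s - r) * g (Suc n) s) \<longlonglongrightarrow> (s - r) * Fp s * Gt s + \<xi> * (1 - r) * s * (Gt s - Gt r) + \<xi> * (s - r) * Gt r"
    unfolding g_rec[OF s(1) less_imp_le[OF s(2)]]
    by (intro tendsto_intros g_lim[OF s] g_lim[OF r])
  ultimately show ?thesis by (rule LIMSEQ_unique)
qed

definition D :: "real \<Rightarrow> real" where "D s = - \<xi> * r + (s - r) * W s"

lemma Gt_D:
  assumes s: "0 \<le> s" "s < 1"
  shows "Gt s * D s = - \<xi> * r * Gt r"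
proof -
  have e: "(s - r) * Gt s = (s - r) * ((1 - \<xi>) - (1 - s) * W s) * Gt s + \<xi> * (1 - r) * s * (Gt s - Gt r) + \<xi> * (s - r) * Gt r"
    using Gt_eq[OF s] Fp_W[OF s(1) less_imp_le[OF s(2)]] by simp
  have "(1 - s) * (Gt s * D s + \<xi> * r * Gt r) = 0"
    using e unfolding D_def by (simp add: algebra_simps)
  then show ?thesis using s by simp
qed

lemma Gt_r_bound: "\<xi> * r / (1 - r) * Gt r \<ge> - mean"
proof -
  have r: "0 \<le> r" "r < 1" using rr by auto
  have "(\<lambda>n. \<xi> * r / (1 - r) * g n r) \<longlonglongrightarrow> \<xi> * r / (1 - r) * Gt r"
    by (intro tendsto_intros g_lim[OF r])
  then show ?thesis by (rule LIMSEQ_le_const) (use drift_bound in auto)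
qed

lemma Gt_sk: "(\<lambda>k. Gt (sk k)) \<longlonglongrightarrow> prob {\<omega> \<in> space M. bddS \<omega>}"
proof -
  have "(\<lambda>k. Gt (sk k)) \<longlonglongrightarrow> (\<integral>\<omega>. (if bddS \<omega> then 1 else 0) \<partial>M)"
    unfolding Gt_def
  proof (rule integral_dominated_convergence[where w="\<lambda>_. 1"])
    show "(\<lambda>\<omega>. if bddS \<omega> then 1 else 0::real) \<in> borel_measurable M" by measurable
    show "(\<lambda>\<omega>. if bddS \<omega> then sk k ^ nat (SupS \<omega>) else 0) \<in> borel_measurable M" for k
      using sk_bounds[of k] by (intro Gt_meas) auto
    show "integrable M (\<lambda>_. 1::real)" by simp
    show "AE \<omega> in M. (\<lambda>k. if bddS \<omega> then sk k ^ nat (SupS \<omega>) else 0) \<longlonglongrightarrow> (if bddS \<omega> then 1 else 0)"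
    proof (rule AE_I2)
      fix \<omega>
      have "(\<lambda>k. sk k ^ nat (SupS \<omega>)) \<longlonglongrightarrow> 1 ^ nat (SupS \<omega>)"
        by (intro tendsto_intros sk_lim)
      then show "(\<lambda>k. if bddS \<omega> then sk k ^ nat (SupS \<omega>) else 0) \<longlonglongrightarrow> (if bddS \<omega> then 1 else 0)"
        by simp
    qed
    show "AE \<omega> in M. norm (if bddS \<omega> then sk k ^ nat (SupS \<omega>) else 0) \<le> 1" for k
      using sk_bounds[of k] by (intro AE_I2) (simp add: power_le_one)
  qed
  also have "(\<integral>\<omega>. (if bddS \<omega> then 1 else 0) \<partial>M) = (\<integral>\<omega>. indicator {\<omega> \<in> space M. bddS \<omega>} \<omega> \<partial>M)"
    by (rule Bochner_Integration.integral_cong) auto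
  also have "\<dots> = prob {\<omega> \<in> space M. bddS \<omega>}" by (simp add: Int_absorb2)
  finally show ?thesis .
qed

lemma bdd_ae: "prob {\<omega> \<in> space M. bddS \<omega>} = 1" and Gt_r: "\<xi> * r * Gt r = - (1 - r) * mean"
proof -
  have "(\<lambda>k. Gt (sk k) * D (sk k)) \<longlonglongrightarrow> prob {\<omega> \<in> space M. bddS \<omega>} * (- \<xi> * r + (1 - r) * (mean + \<xi> * r / (1 - r)))"
    unfolding D_def by (intro tendsto_intros Gt_sk sk_lim W_lim)
  moreover have "Gt (sk k) * D (sk k) = - \<xi> * r * Gt r" for k
    using sk_bounds[of k] by (intro Gt_D) auto
  ultimately have "prob {\<omega> \<in> space M. bddS \<omega>} * (- \<xi> * r + (1 - r) * (mean + \<xi> * r / (1 - r))) = - \<xi> * r * Gt r"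
    by (simp add: LIMSEQ_const_iff)
  moreover have "- \<xi> * r + (1 - r) * (mean + \<xi> * r / (1 - r)) = (1 - r) * mean"
    using rr by (simp add: field_simps)
  ultimately have E: "prob {\<omega> \<in> space M. bddS \<omega>} * ((1 - r) * mean) = - \<xi> * r * Gt r" by simp
  have B: "\<xi> * r * Gt r \<ge> - (1 - r) * mean"
    using Gt_r_bound rr by (simp add: field_simps)
  have neg: "(1 - r) * mean < 0" using rr meanneg by (simp add: mean_def mult_pos_neg)
  have rm: "(r - 1) * mean = - ((1 - r) * mean)" by (simp add: algebra_simps)
  have "prob {\<omega> \<in> space M. bddS \<omega>} * ((1 - r) * mean) \<le> (1 - r) * mean" using E B rm by simp
  then have "prob {\<omega> \<in> space M. bddS \<omega>} \<ge> 1" using neg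
    by (metis mult_le_cancel_right2 not_less)
  then show P1: "prob {\<omega> \<in> space M. bddS \<omega>} = 1" using prob_le_1 by (intro antisym) auto
  show "\<xi> * r * Gt r = - (1 - r) * mean" using E[unfolded P1] rm by linarith
qed

definition Fk :: "nat \<Rightarrow> 'a set" where
  "Fk k = {\<omega> \<in> space M. \<forall>j. 0 < Sv (Suc j) (\<lambda>i. X (k + i) \<omega>)}"

lemma Fk_sets[measurable]: "Fk k \<in> sets M"
  unfolding Fk_def Sv_def by measurable

lemma Fk_prob: "prob (Fk k) = prob (Fk 0)"
proof -
  have S: "{v \<in> space (PV UNIV). \<forall>j. 0 < Sv (Suc j) v} \<in> sets (PV UNIV)"
    unfolding Sv_def by measurable
  have "prob {\<omega> \<in> space M. \<forall>j. 0 < Sv (Suc j) (\<lambda>i\<in>UNIV. X ((+) k i) \<omega>)} = prob {\<omega> \<in> space M. \<forall>j. 0 < Sv (Suc j) (\<lambda>i\<in>UNIV. X i \<omega>)}"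
    by (rule vec_transfer_prob[OF _ S]) simp
  then show ?thesis by (simp add: Fk_def restrict_def)
qed

lemma Fk_unbdd:
  assumes \<omega>: "\<omega> \<in> (\<Inter>N. \<Union>k\<in>{N..}. Fk k)"
  shows "\<not> bddS \<omega>"
proof
  assume "bddS \<omega>"
  then obtain b where b: "\<And>n. Sv n (\<lambda>i. X i \<omega>) \<le> b" by (auto simp: bddS_def)
  have next_: "\<exists>k'. \<omega> \<in> Fk k' \<and> Sv k' (\<lambda>i. X i \<omega>) \<ge> Sv k (\<lambda>i. X i \<omega>) + 1" if k: "\<omega> \<in> Fk k" for k
  proof -
    obtain k' where k': "k' \<ge> Suc k" "\<omega> \<in> Fk k'" using \<omega> by blast
    define j where "j = k' - Suc k"
    have "0 < Sv (Suc j) (\<lambda>i. X (k + i) \<omega>)" using k by (auto simp: Fk_def)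
    moreover have "Sv k' (\<lambda>i. X i \<omega>) = Sv k (\<lambda>i. X i \<omega>) + Sv (Suc j) (\<lambda>i. X (k + i) \<omega>)"
      using Sv_add[of k "Suc j" "\<lambda>i. X i \<omega>"] k'(1) by (simp add: j_def)
    ultimately show ?thesis using k' by auto
  qed
  obtain k1 where k1: "\<omega> \<in> Fk k1" using \<omega> by blast
  have "\<exists>k. \<omega> \<in> Fk k \<and> Sv k (\<lambda>i. X i \<omega>) \<ge> Sv k1 (\<lambda>i. X i \<omega>) + int K" for K
  proof (induction K)
    case 0 then show ?case using k1 by auto
  next
    case (Suc K)
    then obtain k where "\<omega> \<in> Fk k" "Sv k (\<lambda>i. X i \<omega>) \<ge> Sv k1 (\<lambda>i. X i \<omega>) + int K" by blast
    with next_ show ?case by fastforce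
  qed
  from this[of "nat (b - Sv k1 (\<lambda>i. X i \<omega>)) + 1"] obtain k where
    "Sv k (\<lambda>i. X i \<omega>) \<ge> Sv k1 (\<lambda>i. X i \<omega>) + int (nat (b - Sv k1 (\<lambda>i. X i \<omega>)) + 1)" by blast
  then show False using b[of k] by linarith
qed

lemma F0_zero: "prob (Fk 0) = 0"
proof -
  define U where "U N = (\<Union>k\<in>{N..}. Fk k)" for N
  have Us: "U N \<in> sets M" for N unfolding U_def by measurable
  have dec: "decseq U" unfolding decseq_def U_def by (intro allI impI UN_mono) auto
  have lim: "(\<lambda>N. prob (U N)) \<longlonglongrightarrow> prob (\<Inter>N. U N)"
    by (rule finite_Lim_measure_decseq) (use Us dec in auto)
  have ge: "prob (Fk 0) \<le> prob (U N)" for N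
  proof -
    have "prob (Fk 0) = prob (Fk N)" by (rule Fk_prob[symmetric])
    also have "\<dots> \<le> prob (U N)" using Us by (intro finite_measure_mono) (auto simp: U_def)
    finally show ?thesis .
  qed
  have "prob (Fk 0) \<le> prob (\<Inter>N. U N)"
    by (rule LIMSEQ_le_const[OF lim]) (use ge in auto)
  also have "\<dots> \<le> prob (space M - {\<omega> \<in> space M. bddS \<omega>})"
  proof (rule finite_measure_mono)
    show "(\<Inter>N. U N) \<subseteq> space M - {\<omega> \<in> space M. bddS \<omega>}"
    proof
      fix \<omega> assume h: "\<omega> \<in> (\<Inter>N. U N)"
      then have "\<omega> \<in> U 0" by (rule InterD) simp
      then obtain k where "\<omega> \<in> Fk k" unfolding U_def by blast
      then have sp: "\<omega> \<in> space M" by (simp add: Fk_def)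
      have "\<not> bddS \<omega>" by (rule Fk_unbdd) (use h in \<open>simp add: U_def\<close>)
      then show "\<omega> \<in> space M - {\<omega> \<in> space M. bddS \<omega>}" using sp by simp
    qed
  qed measurable
  also have "\<dots> = 0" using prob_compl[of "{\<omega> \<in> space M. bddS \<omega>}"] bdd_ae by simp
  finally show ?thesis using measure_nonneg[of M "Fk 0"] by linarith
qed

definition Cn :: "nat \<Rightarrow> 'a set" where
  "Cn n = {\<omega> \<in> space M. (\<forall>k\<in>{1..<Suc n}. 0 < Sv k (\<lambda>i. X i \<omega>)) \<and> Sv (Suc n) (\<lambda>i. X i \<omega>) \<le> 0}"

lemma Cn_sets[measurable]: "Cn n \<in> sets M" unfolding Cn_def Sv_def by measurable

lemma Cn_disj0: "\<omega> \<in> Cn m \<Longrightarrow> \<omega> \<in> Cn n \<Longrightarrow> m < n \<Longrightarrow> False"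
proof -
  assume a: "\<omega> \<in> Cn m" "\<omega> \<in> Cn n" "m < n"
  from a(2,3) have "0 < Sv (Suc m) (\<lambda>i. X i \<omega>)" unfolding Cn_def by auto
  with a(1) show False unfolding Cn_def by auto
qed

lemma Cn_disj: "disjoint_family Cn"
  unfolding disjoint_family_on_def
proof (intro ballI impI)
  fix m n :: nat assume "m \<noteq> n"
  show "Cn m \<inter> Cn n = {}"
  proof (rule ccontr)
    assume "Cn m \<inter> Cn n \<noteq> {}"
    then obtain \<omega> where a: "\<omega> \<in> Cn m" and b: "\<omega> \<in> Cn n" by blast
    show False using Cn_disj0[OF a b] Cn_disj0[OF b a] \<open>m \<noteq> n\<close> by linarith
  qed
qed

lemma Cn_Un: "(\<Union>n. Cn n) = space M - Fk 0"
proof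
  show "(\<Union>n. Cn n) \<subseteq> space M - Fk 0"
  proof
    fix \<omega> assume "\<omega> \<in> (\<Union>n. Cn n)"
    then obtain n where n: "\<omega> \<in> Cn n" by blast
    then have le0: "Sv (Suc n) (\<lambda>i. X i \<omega>) \<le> 0" and "\<omega> \<in> space M" by (auto simp: Cn_def)
    have "\<omega> \<notin> Fk 0"
    proof
      assume "\<omega> \<in> Fk 0"
      then have "0 < Sv (Suc n) (\<lambda>i. X (0 + i) \<omega>)" unfolding Fk_def by blast
      then show False using le0 by simp
    qed
    then show "\<omega> \<in> space M - Fk 0" using \<open>\<omega> \<in> space M\<close> by simp
  qed
  show "space M - Fk 0 \<subseteq> (\<Union>n. Cn n)"
  proof
    fix \<omega> assume \<omega>: "\<omega> \<in> space M - Fk 0"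
    then have ex: "\<exists>j. Sv (Suc j) (\<lambda>i. X i \<omega>) \<le> 0" by (auto simp: Fk_def not_less)
    define n where "n = (LEAST j. Sv (Suc j) (\<lambda>i. X i \<omega>) \<le> 0)"
    have n: "Sv (Suc n) (\<lambda>i. X i \<omega>) \<le> 0" unfolding n_def by (rule LeastI_ex[OF ex])
    have lt: "0 < Sv (Suc j) (\<lambda>i. X i \<omega>)" if "j < n" for j
      using not_less_Least[OF that[unfolded n_def]] by simp
    have "\<forall>k\<in>{1..<Suc n}. 0 < Sv k (\<lambda>i. X i \<omega>)"
    proof
      fix k assume "k \<in> {1..<Suc n}"
      then obtain j where "k = Suc j" "j < n" by (cases k) auto
      then show "0 < Sv k (\<lambda>i. X i \<omega>)" using lt by simp
    qed
    then have "\<omega> \<in> Cn n" using n \<omega> by (simp add: Cn_def)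
    then show "\<omega> \<in> (\<Union>n. Cn n)" by blast
  qed
qed

lemma Cn_sum: "(\<lambda>n. prob (Cn n)) sums 1"
proof -
  have "(\<lambda>n. prob (Cn n)) sums prob (\<Union>n. Cn n)"
    by (rule measure_UNION[OF _ Cn_disj]) (auto simp: emeasure_finite)
  moreover have "prob (\<Union>n. Cn n) = 1"
    unfolding Cn_Un using prob_compl[of "Fk 0"] F0_zero by simp
  ultimately show ?thesis by simp
qed

definition Bn :: "nat \<Rightarrow> 'a set" where
  "Bn n = {\<omega> \<in> space M. (\<forall>k\<in>{1..<Suc n}. 0 < Sv k (\<lambda>i. X i \<omega>)) \<and> Sv (Suc n) (\<lambda>i. X i \<omega>) = 0}"

lemma Bn_sets[measurable]: "Bn n \<in> sets M" unfolding Bn_def Sv_def by measurable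

lemma A_B: "prob {\<omega> \<in> space M. (\<forall>k\<in>{1..<Suc n}. rw_S X k \<omega> < 0) \<and> rw_S X (Suc n) \<omega> = 0} = prob (Bn n)"
proof -
  define \<Phi> where "\<Phi> v = ((\<forall>k\<in>{1..<Suc n}. Sv k v < 0) \<and> Sv (Suc n) v = 0)" for v
  have T: "prob {\<omega> \<in> space M. \<Phi> (\<lambda>i\<in>{..<Suc n}. X (n - i) \<omega>)} = prob {\<omega> \<in> space M. \<Phi> (\<lambda>i\<in>{..<Suc n}. X i \<omega>)}"
    by (rule vec_transfer_prob[OF inj_rev1 PV_sets]) simp
  have c1: "\<Phi> (\<lambda>i\<in>{..<Suc n}. X i \<omega>) \<longleftrightarrow> (\<forall>k\<in>{1..<Suc n}. rw_S X k \<omega> < 0) \<and> rw_S X (Suc n) \<omega> = 0" for \<omega>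
  proof -
    have "Sv k (\<lambda>i\<in>{..<Suc n}. X i \<omega>) = Sv k (\<lambda>i. X i \<omega>)" if "k \<le> Suc n" for k
      by (rule Sv_cong[OF that]) simp
    then show ?thesis unfolding \<Phi>_def rw_S_Sv by auto
  qed
  have c2: "\<Phi> (\<lambda>i\<in>{..<Suc n}. X (n - i) \<omega>) \<longleftrightarrow> \<omega> \<in> Bn n" if \<omega>: "\<omega> \<in> space M" for \<omega>
  proof -
    define S where "S j = Sv j (\<lambda>i. X i \<omega>)" for j
    have rv: "Sv k (\<lambda>i\<in>{..<Suc n}. X (n - i) \<omega>) = S (Suc n) - S (Suc n - k)" if "k \<le> Suc n" for k
    proof -
      have "Sv k (\<lambda>i\<in>{..<Suc n}. X (n - i) \<omega>) = (\<Sum>i<k. X (n - i) \<omega>)"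
        unfolding Sv_def using that by (intro sum.cong) auto
      also have "\<dots> = S (Suc n) - S (Suc n - k)"
        unfolding S_def Sv_def by (rule revsum[OF that])
      finally show ?thesis .
    qed
    have S0: "S 0 = 0" by (simp add: S_def Sv_def)
    have "\<Phi> (\<lambda>i\<in>{..<Suc n}. X (n - i) \<omega>) \<longleftrightarrow> (\<forall>k\<in>{1..<Suc n}. S (Suc n) - S (Suc n - k) < 0) \<and> S (Suc n) = 0"
      unfolding \<Phi>_def using rv[of "Suc n"] rv S0 by auto
    also have "\<dots> \<longleftrightarrow> (\<forall>k\<in>{1..<Suc n}. 0 < S (Suc n - k)) \<and> S (Suc n) = 0" by auto
    also have "\<dots> \<longleftrightarrow> (\<forall>j\<in>{1..<Suc n}. 0 < S j) \<and> S (Suc n) = 0"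
      using rev_equiv[of n "\<lambda>j. 0 < S j"] by simp
    also have "\<dots> \<longleftrightarrow> \<omega> \<in> Bn n" using \<omega> by (simp add: Bn_def S_def)
    finally show ?thesis .
  qed
  have "{\<omega> \<in> space M. \<Phi> (\<lambda>i\<in>{..<Suc n}. X (n - i) \<omega>)} = Bn n"
    using c2 by (auto simp: Bn_def)
  moreover have "{\<omega> \<in> space M. \<Phi> (\<lambda>i\<in>{..<Suc n}. X i \<omega>)} = {\<omega> \<in> space M. (\<forall>k\<in>{1..<Suc n}. rw_S X k \<omega> < 0) \<and> rw_S X (Suc n) \<omega> = 0}"
    using c1 by auto
  ultimately show ?thesis using T by simp
qed

lemma B_C: "prob (Bn n) = (1 - r) * prob (Cn n)"
proof -
  define Pp where "Pp v = (\<forall>k\<in>{1..<Suc n}. 0 < Sv k v)" for v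
  define F where "F v x = (if Pp v \<and> Sv n v + x = 0 then 1 else 0::real)" for v x
  define G where "G v x = (if Pp v \<and> Sv n v + x \<le> 0 then 1 else 0::real)" for v x
  have Pp_eq: "Pp (\<lambda>i\<in>{..<n}. X i \<omega>) = Pp (\<lambda>i. X i \<omega>)" for \<omega>
  proof -
    have "Sv k (\<lambda>i\<in>{..<n}. X i \<omega>) = Sv k (\<lambda>i. X i \<omega>)" if "k \<le> n" for k
      by (rule Sv_cong[OF that]) simp
    then show ?thesis unfolding Pp_def by auto
  qed
  have Sn_eq: "Sv n (\<lambda>i\<in>{..<n}. X i \<omega>) = Sv n (\<lambda>i. X i \<omega>)" for \<omega>
    by (rule Sv_cong) auto
  have SSuc: "Sv (Suc n) (\<lambda>i. X i \<omega>) = Sv n (\<lambda>i. X i \<omega>) + X n \<omega>" for \<omega>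
    by (simp add: Sv_def)
  have eF: "F (\<lambda>i\<in>{..<n}. X i \<omega>) (X n \<omega>) = indicator (Bn n) \<omega>" if "\<omega> \<in> space M" for \<omega>
    using that unfolding F_def Pp_eq Sn_eq by (simp add: Bn_def Pp_def SSuc indicator_def)
  have eG: "G (\<lambda>i\<in>{..<n}. X i \<omega>) (X n \<omega>) = indicator (Cn n) \<omega>" if "\<omega> \<in> space M" for \<omega>
    using that unfolding G_def Pp_eq Sn_eq by (simp add: Cn_def Pp_def SSuc indicator_def)
  have intF: "integrable M (\<lambda>\<omega>. F (\<lambda>i\<in>{..<n}. X i \<omega>) (X n \<omega>))"
    by (subst Bochner_Integration.integrable_cong[OF refl eF]) (auto intro: integrable_real_indicator simp: emeasure_finite less_top[symmetric])
  have intG: "integrable M (\<lambda>\<omega>. G (\<lambda>i\<in>{..<n}. X i \<omega>) (X n \<omega>))"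
    by (subst Bochner_Integration.integrable_cong[OF refl eG]) (auto intro: integrable_real_indicator simp: emeasure_finite less_top[symmetric])
  have nn: "0 \<le> Sv n v" if "Pp v" for v
  proof (cases n)
    case 0 then show ?thesis by (simp add: Sv_def)
  next
    case (Suc m) then have "n \<in> {1..<Suc n}" by simp
    with that show ?thesis unfolding Pp_def by fastforce
  qed
  have inner: "(\<integral>\<omega>'. F v (X 0 \<omega>') \<partial>M) = (1 - r) * (\<integral>\<omega>'. G v (X 0 \<omega>') \<partial>M)" for v
  proof (cases "Pp v")
    case True
    have "(\<integral>\<omega>'. F v (X 0 \<omega>') \<partial>M) = (\<integral>\<omega>'. (if X 0 \<omega>' = - Sv n v then 1 else 0) \<partial>M)"
      unfolding F_def using True by (intro Bochner_Integration.integral_cong) auto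
    also have "\<dots> = prob {\<omega>' \<in> space M. X 0 \<omega>' = - Sv n v}" by (rule int_ind(2))
    also have "\<dots> = (1 - r) * prob {\<omega>' \<in> space M. X 0 \<omega>' \<le> - Sv n v}" by (rule point_le[OF nn[OF True]])
    also have "prob {\<omega>' \<in> space M. X 0 \<omega>' \<le> - Sv n v} = (\<integral>\<omega>'. (if X 0 \<omega>' \<le> - Sv n v then 1 else 0) \<partial>M)"
      by (rule int_ind(2)[symmetric])
    also have "\<dots> = (\<integral>\<omega>'. G v (X 0 \<omega>') \<partial>M)"
      unfolding G_def using True by (intro Bochner_Integration.integral_cong) auto
    finally show ?thesis .
  next
    case False then show ?thesis by (simp add: F_def G_def)
  qed
  have "prob (Bn n) = (\<integral>\<omega>. indicator (Bn n) \<omega> \<partial>M)" by (simp add: Int_absorb2)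
  also have "\<dots> = (\<integral>\<omega>. F (\<lambda>i\<in>{..<n}. X i \<omega>) (X n \<omega>) \<partial>M)"
    by (rule Bochner_Integration.integral_cong[OF refl eF[symmetric]])
  also have "\<dots> = (\<integral>\<omega>. (\<integral>\<omega>'. F (\<lambda>i\<in>{..<n}. X i \<omega>) (X 0 \<omega>') \<partial>M) \<partial>M)"
    by (rule split_last[OF intF])
  also have "\<dots> = (\<integral>\<omega>. (1 - r) * (\<integral>\<omega>'. G (\<lambda>i\<in>{..<n}. X i \<omega>) (X 0 \<omega>') \<partial>M) \<partial>M)"
    by (simp only: inner)
  also have "\<dots> = (1 - r) * (\<integral>\<omega>. (\<integral>\<omega>'. G (\<lambda>i\<in>{..<n}. X i \<omega>) (X 0 \<omega>') \<partial>M) \<partial>M)"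
    by simp
  also have "(\<integral>\<omega>. (\<integral>\<omega>'. G (\<lambda>i\<in>{..<n}. X i \<omega>) (X 0 \<omega>') \<partial>M) \<partial>M) = (\<integral>\<omega>. G (\<lambda>i\<in>{..<n}. X i \<omega>) (X n \<omega>) \<partial>M)"
    by (rule split_last[OF intG, symmetric])
  also have "\<dots> = (\<integral>\<omega>. indicator (Cn n) \<omega> \<partial>M)"
    by (rule Bochner_Integration.integral_cong[OF refl eG])
  also have "\<dots> = prob (Cn n)" by (simp add: Int_absorb2)
  finally show ?thesis .
qed

lemma zeta: "(\<Sum>n. prob {\<omega> \<in> space M. (\<forall>k\<in>{1..<Suc n}. rw_S X k \<omega> < 0) \<and> rw_S X (Suc n) \<omega> = 0}) = 1 - r"
proof -
  have "(\<lambda>n. (1 - r) * prob (Cn n)) sums ((1 - r) * 1)" by (rule sums_mult[OF Cn_sum])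
  moreover have "(\<lambda>n. prob {\<omega> \<in> space M. (\<forall>k\<in>{1..<Suc n}. rw_S X k \<omega> < 0) \<and> rw_S X (Suc n) \<omega> = 0}) = (\<lambda>n. (1 - r) * prob (Cn n))"
    by (rule ext) (simp only: A_B B_C)
  ultimately show ?thesis by (simp add: sums_iff)
qed

lemma SupS_unbdd: "\<not> bddS \<omega> \<Longrightarrow> SupS \<omega> = (THE x::int. False)"
proof -
  assume nb: "\<not> bddS \<omega>"
  have "(\<lambda>x. x \<in> range (\<lambda>n. Sv n (\<lambda>i. X i \<omega>)) \<and> (\<forall>y\<in>range (\<lambda>n. Sv n (\<lambda>i. X i \<omega>)). y \<le> x)) = (\<lambda>x. False)"
    using nb by (auto simp: bddS_def fun_eq_iff)
  then show ?thesis unfolding SupS_def Sup_int_def by simp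
qed

lemma Ms_Gt:
  assumes s: "0 \<le> s" "s < 1"
  shows "(\<integral>\<omega>. s ^ nat (Sup (range (\<lambda>n. rw_S X n \<omega>))) \<partial>M) = Gt s"
proof -
  have eq: "s ^ nat (Sup (range (\<lambda>n. rw_S X n \<omega>))) = (if bddS \<omega> then (if bddS \<omega> then s ^ nat (SupS \<omega>) else 0) else s ^ nat (THE x::int. False))" for \<omega>
    using SupS_unbdd[of \<omega>] by (simp add: rw_S_Sv SupS_def)
  have m: "(\<lambda>\<omega>. (if bddS \<omega> then (if bddS \<omega> then s ^ nat (SupS \<omega>) else 0) else s ^ nat (THE x::int. False))) \<in> borel_measurable M"
    by (rule measurable_If[OF Gt_meas[OF s]]) auto
  have ae: "AE \<omega> in M. bddS \<omega>"
  proof -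
    have "AE \<omega> in M. \<omega> \<in> {\<omega> \<in> space M. bddS \<omega>}"
      by (subst AE_in_set_eq_1) (auto simp: bdd_ae)
    then show ?thesis by auto
  qed
  have "(\<integral>\<omega>. s ^ nat (Sup (range (\<lambda>n. rw_S X n \<omega>))) \<partial>M) = (\<integral>\<omega>. (if bddS \<omega> then (if bddS \<omega> then s ^ nat (SupS \<omega>) else 0) else s ^ nat (THE x::int. False)) \<partial>M)"
    by (simp only: eq)
  also have "\<dots> = Gt s" unfolding Gt_def
  proof (rule integral_cong_AE[OF m Gt_meas[OF s]])
    show "AE \<omega> in M. (if bddS \<omega> then (if bddS \<omega> then s ^ nat (SupS \<omega>) else 0) else s ^ nat (THE x::int. False)) = (if bddS \<omega> then s ^ nat (SupS \<omega>) else 0)"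
      using ae by eventually_elim simp
  qed
  finally show ?thesis .
qed

lemma final:
  assumes s: "0 \<le> s" "s < 1"
  shows "(\<integral>\<omega>. s ^ nat (Sup (range (\<lambda>n. rw_S X n \<omega>))) \<partial>M) =
    (1 - (1 - r) - r - (1 - r) * mean) / (1 - (1 - r) - ((1 - (1 - r) / (1 - s)) * Fp s + s * ((1 - r) / (1 - s)) * (1 - \<xi>)))"
proof -
  have GD: "Gt s * D s = (1 - r) * mean" using Gt_D[OF s] Gt_r by (simp add: algebra_simps)
  have nz: "(1 - r) * mean \<noteq> 0" using rr meanneg by (simp add: mean_def)
  then have Dnz: "D s \<noteq> 0" using GD by auto
  have s1: "1 - s \<noteq> 0" using s by simp
  have den: "1 - (1 - r) - ((1 - (1 - r) / (1 - s)) * Fp s + s * ((1 - r) / (1 - s)) * (1 - \<xi>)) = - D s"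
  proof -
    have k: "(r - s) * ((1 - \<xi>) - (1 - s) * W s) + s * (1 - r) * (1 - \<xi>) = (1 - s) * ((1 - \<xi>) * r - (r - s) * W s)"
      by (simp add: algebra_simps)
    have e2: "(1 - (1 - r) / (1 - s)) * ((1 - \<xi>) - (1 - s) * W s) + s * ((1 - r) / (1 - s)) * (1 - \<xi>) = (1 - \<xi>) * r - (r - s) * W s"
    proof -
      have e1: "1 - (1 - r) / (1 - s) = (r - s) / (1 - s)" using s1 by (simp add: field_simps)
      have "(1 - (1 - r) / (1 - s)) * ((1 - \<xi>) - (1 - s) * W s) + s * ((1 - r) / (1 - s)) * (1 - \<xi>) = ((r - s) * ((1 - \<xi>) - (1 - s) * W s) + s * (1 - r) * (1 - \<xi>)) / (1 - s)"
        unfolding e1 by (simp add: add_divide_distrib)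
      also have "\<dots> = (1 - \<xi>) * r - (r - s) * W s" unfolding k using s1 by simp
      finally show ?thesis .
    qed
    show ?thesis unfolding Fp_W[OF s(1) less_imp_le[OF s(2)]] e2 D_def by (simp add: algebra_simps)
  qed
  have num: "1 - (1 - r) - r - (1 - r) * mean = - ((1 - r) * mean)" by simp
  have "Gt s = (1 - r) * mean / D s" using GD Dnz by (simp add: eq_divide_eq)
  then show ?thesis unfolding Ms_Gt[OF s] den num using Dnz by simp
qed

end

theorem mainTheorem4:
  fixes M :: "'a measure" and X :: "nat \<Rightarrow> 'a \<Rightarrow> int"
    and \<xi> r s :: real
  assumes "prob_space M"
    and "prob_space.indep_vars M (\<lambda>_. count_space UNIV) X UNIV"
    and "\<And>i. distr M (count_space UNIV) (X i) = distr M (count_space UNIV) (X 0)"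
    and "measure M {\<omega> \<in> space M. X 0 \<omega> > 0} > 0"
    and "measure M {\<omega> \<in> space M. X 0 \<omega> < 0} > 0"
    and "integrable M (\<lambda>\<omega>. real_of_int (X 0 \<omega>))"
    and "(\<integral>\<omega>. real_of_int (X 0 \<omega>) \<partial>M) < 0"
    and "0 < \<xi>" "\<xi> < 1" "0 < r" "r < 1"
    and "\<And>x::int. x \<le> 0 \<Longrightarrow> measure M {\<omega> \<in> space M. X 0 \<omega> \<le> x} = \<xi> * r ^ nat (- x)"
    and "0 \<le> s" "s < 1"
  shows
   "(let \<zeta> = (\<Sum>n. measure M {\<omega> \<in> space M.
                     (\<forall>k\<in>{1..<Suc n}. rw_S X k \<omega> < 0) \<and> rw_S X (Suc n) \<omega> = 0});
         mean = (\<integral>\<omega>. real_of_int (X 0 \<omega>) \<partial>M);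
         F0 = measure M {\<omega> \<in> space M. X 0 \<omega> \<le> 0};
         Fplus = (\<Sum>x. s ^ Suc x * measure M {\<omega> \<in> space M. X 0 \<omega> = int (Suc x)});
         Ms = (\<integral>\<omega>. s ^ nat (Sup (range (\<lambda>n. rw_S X n \<omega>))) \<partial>M)
     in Ms = (1 - \<zeta> - r - (1 - r) * mean) /
             (1 - \<zeta> - ((1 - (1 - r) / (1 - s)) * Fplus + s * ((1 - r) / (1 - s)) * (1 - F0))))"
proof -
  have R: "rw M X \<xi> r"
    unfolding rw_def rw_axioms_def using assms by auto
  interpret rw M X \<xi> r by (rule R)
  have F0: "measure M {\<omega> \<in> space M. X 0 \<omega> \<le> 0} = \<xi>" using tail[of 0] by simp
  show ?thesis
    unfolding Let_def zeta F0 Fp_def[symmetric] mean_def[symmetric]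
    by (rule final) (use assms in auto)
qed

end
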